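(* Let $d\in\mathbb N$, let $\lambda_1,\dots,\lambda_d\in\mathbb C$ be the roots of an irreducible polynomial of degree $d$ with integer coefficients, and let $c_1,\dots,c_d\in\mathbb C$. Assume the dominant root condition: $\lambda_1$ is real, $\lambda_1>1$, $\lambda_1>\max\{|\lambda_2|,\dots,|\lambda_d|\}$, and $c_1\ne0$. Assume that $a_k=c_1\lambda_1^k+\dots+c_d\lambda_d^k$ is a positive integer for every $k\in\mathbb N$, and let $S_n(\omega)=\sum_{k=1}^n\cos(2\pi a_k\omega)$, $\omega\in[0,1]$, viewed as a random variable on $[0,1]$ with Lebesgue measure. Then for every $m\in\mathbb N$ there exist an integer $n_1(m)$ and integers $w_m,b_m\in\mathbb Z$, depending only on $m$ and on $c_1,\dots,c_d,\lambda_1,\dots,\lambda_d$, such that $$\kappa_m(S_n)=2^{-m}(w_m n+b_m)\qquad\text{for all } n>n_1(m).$$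
   Context: For a bounded random variable $X$, its $m$-th cumulant is $\kappa_m(X)=\frac{d^m}{dt^m}\log\mathbb E[e^{tX}]\big|_{t=0}$. *)

theory Defs
  imports "HOL-Analysis.Analysis" "HOL-Computational_Algebra.Polynomial"
begin

definition cumulant :: "real measure \<Rightarrow> nat \<Rightarrow> (real \<Rightarrow> real) \<Rightarrow> real" where
  "cumulant M m X = (deriv ^^ m) (\<lambda>t. ln (integral\<^sup>L M (\<lambda>\<omega>. exp (t * X \<omega>)))) 0"

definition lin_rec_seq :: "nat \<Rightarrow> (nat \<Rightarrow> complex) \<Rightarrow> (nat \<Rightarrow> complex) \<Rightarrow> nat \<Rightarrow> complex" where
  "lin_rec_seq d c lam k = (\<Sum>i=1..d. c i * lam i ^ k)"

definition S_sum :: "(nat \<Rightarrow> complex) \<Rightarrow> nat \<Rightarrow> real \<Rightarrow> real" where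
  "S_sum a n \<omega> = (\<Sum>k=1..n. cos (2 * pi * Re (a k) * \<omega>))"

end

theory Submission
  imports Defs "HOL-Computational_Algebra.Polynomial_Factorial"
begin

lemma map_poly_of_int_add: "map_poly (of_int :: int \<Rightarrow> 'a::comm_ring_1) (p + q) = map_poly of_int p + map_poly of_int q"
  by (rule poly_eqI) (simp add: coeff_map_poly)

lemma map_poly_of_int_mult: "map_poly (of_int :: int \<Rightarrow> 'a::comm_ring_1) (p * q) = map_poly of_int p * map_poly of_int q"
  by (rule poly_eqI) (simp add: coeff_map_poly coeff_mult)

lemma ipoly_mult: "poly (map_poly (of_int :: int \<Rightarrow> 'a::comm_ring_1) (p * q)) x = poly (map_poly of_int p) x * poly (map_poly of_int q) x"
  by (simp add: map_poly_of_int_mult)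

lemma ipoly_smult: "poly (map_poly (of_int :: int \<Rightarrow> 'a::comm_ring_1) (smult a q)) x = of_int a * poly (map_poly of_int q) x"
proof -
  have "smult a q = [:a:] * q" by simp
  then show ?thesis by (simp only: ipoly_mult) (simp add: map_poly_pCons)
qed

lemma ipoly_add: "poly (map_poly (of_int :: int \<Rightarrow> 'a::comm_ring_1) (p + q)) x = poly (map_poly of_int p) x + poly (map_poly of_int q) x"
  by (simp add: map_poly_of_int_add)

lemma galois:
  fixes d :: nat and p P :: "int poly" and lam :: "nat \<Rightarrow> complex"
  assumes irred: "irreducible p"
    and deg: "degree p = d"
    and roots: "map_poly of_int p = smult (of_int (lead_coeff p)) (\<Prod>i=1..d. [:- lam i, 1:])"
    and d_pos: "d \<ge> 1"
    and P0: "poly (map_poly of_int P) (lam 1) = 0"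
    and l: "l \<in> {1..d}"
  shows "poly (map_poly of_int P) (lam l) = 0"
proof -
  let ?ev = "\<lambda>g::int poly. poly (map_poly of_int g) (lam 1)"
  have p0: "p \<noteq> 0" using irred by auto
  have rootp: "poly (map_poly of_int p) (lam j) = 0" if "j \<in> {1..d}" for j
  proof -
    have "poly (\<Prod>i=1..d. [:- lam i, 1:]) (lam j) = (\<Prod>i=1..d. poly [:- lam i, 1:] (lam j))"
      by (simp add: poly_prod)
    also have "\<dots> = 0" using that by (intro prod_zero) auto
    finally show ?thesis by (subst roots) simp
  qed
  define S where "S = {g::int poly. g \<noteq> 0 \<and> ?ev g = 0}"
  have pS: "p \<in> S" unfolding S_def using p0 rootp[of 1] d_pos by auto
  obtain g where gS: "g \<in> S" and gmin: "\<And>g'. g' \<in> S \<Longrightarrow> degree g \<le> degree g'"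
    using ex_has_least_nat[of "\<lambda>g. g \<in> S" p degree] pS by blast
  have g0: "g \<noteq> 0" and gev: "?ev g = 0" using gS unfolding S_def by auto
  have divs: "\<exists>a. a \<noteq> 0 \<and> g dvd smult a Q" if "?ev Q = 0" for Q
  proof -
    define r where "r = pseudo_mod Q g"
    obtain a q where aq: "a \<noteq> 0" "smult a Q = g * q + r"
      using pseudo_mod(1)[OF g0, of Q] unfolding r_def by blast
    have rdeg: "r = 0 \<or> degree r < degree g" using pseudo_mod(2)[OF g0, of Q] unfolding r_def by blast
    have "?ev (smult a Q) = ?ev (g * q) + ?ev r" using aq(2) by (simp add: ipoly_add)
    then have "?ev r = 0" using that gev by (simp add: ipoly_smult ipoly_mult)
    then have "r = 0" using rdeg gmin[of r] unfolding S_def by force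
    then show ?thesis using aq by auto
  qed
  obtain a where a: "a \<noteq> 0" "g dvd smult a p" using divs[of p] pS unfolding S_def by auto
  then obtain h where h: "smult a p = g * h" by (auto elim: dvdE)
  have prime: "prime_elem p" using irred by (rule irreducible_imp_prime_poly)
  have "p dvd g * h" using h[symmetric] by (metis dvd_smult dvd_refl)
  then have "p dvd g \<or> p dvd h" using prime by (simp add: prime_elem_dvd_mult_iff)
  moreover have "\<not> p dvd h"
  proof
    assume "p dvd h"
    then obtain h' where "h = p * h'" by (auto elim: dvdE)
    then have "[:a:] * p = (g * h') * p" using h by (simp add: algebra_simps)
    then have "[:a:] = g * h'" using p0 by (metis mult_cancel_right)
    then have "degree g = 0" using a(1) g0
      by (metis add_is_0 degree_mult_eq degree_pCons_0 mult_zero_right pCons_eq_0_iff)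
    then obtain g0' where "g = [:g0':]" by (metis degree_eq_zeroE)
    then show False using gev g0 by (simp add: map_poly_pCons)
  qed
  ultimately have pg: "p dvd g" by blast
  obtain a' where a': "a' \<noteq> 0" "g dvd smult a' P" using divs[OF P0] by auto
  have "p dvd [:a':] * P" using dvd_trans[OF pg a'(2)] by simp
  then have "p dvd [:a':] * P" by (simp del: mult_pCons_left)
  then have "p dvd [:a':] \<or> p dvd P" using prime by (simp only: prime_elem_dvd_mult_iff)
  moreover have "\<not> p dvd [:a':]"
  proof
    assume "p dvd [:a':]"
    then have "degree p \<le> degree [:a':]" using a'(1) by (intro dvd_imp_degree_le) auto
    then show False using deg d_pos by simp
  qed
  ultimately have "p dvd P" by blast
  then obtain q where "P = p * q" by (auto elim: dvdE)
  then show ?thesis using rootp[OF l] by (simp add: ipoly_mult)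
qed

definition Vs :: "(nat \<Rightarrow> complex) \<Rightarrow> (int \<times> nat) list \<Rightarrow> complex" where
  "Vs a ts = (\<Sum>x\<leftarrow>ts. of_int (fst x) * a (snd x))"

definition sh :: "nat \<Rightarrow> (int \<times> nat) list \<Rightarrow> (int \<times> nat) list" where
  "sh s ts = map (\<lambda>x. (fst x, snd x + s)) ts"

lemma Vs_Nil [simp]: "Vs a [] = 0" by (simp add: Vs_def)
lemma Vs_Cons [simp]: "Vs a (x # ts) = of_int (fst x) * a (snd x) + Vs a ts" by (simp add: Vs_def)
lemma Vs_append [simp]: "Vs a (xs @ ys) = Vs a xs + Vs a ys" by (simp add: Vs_def)
lemma Vs_filter: "Vs a ts = Vs a (filter P ts) + Vs a (filter (\<lambda>x. \<not> P x) ts)"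
  by (induction ts) auto
lemma sh_Nil [simp]: "sh s [] = []" by (simp add: sh_def)
lemma sh_Cons [simp]: "sh s (x # ts) = (fst x, snd x + s) # sh s ts" by (simp add: sh_def)
lemma length_sh [simp]: "length (sh s ts) = length ts" by (simp add: sh_def)

definition Qs :: "complex \<Rightarrow> (int \<times> nat) list \<Rightarrow> complex" where
  "Qs z ps = (\<Sum>x\<leftarrow>ps. of_int (fst x) * z ^ snd x)"

lemma Qs_Nil [simp]: "Qs z [] = 0" by (simp add: Qs_def)
lemma Qs_Cons [simp]: "Qs z (x # ts) = of_int (fst x) * z ^ (snd x) + Qs z ts" by (simp add: Qs_def)

lemma Qs_poly: "\<exists>P::int poly. \<forall>z. poly (map_poly of_int P) z = Qs z ps"
proof (induction ps)
  case Nil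
  then show ?case by (intro exI[of _ 0]) simp
next
  case (Cons x ps)
  then obtain P where P: "\<forall>z. poly (map_poly of_int P) z = Qs z ps" by blast
  show ?case
    by (intro exI[of _ "monom (fst x) (snd x) + P"])
       (simp add: ipoly_add P map_poly_monom poly_monom)
qed

locale NT =
  fixes d :: nat and lam c :: "nat \<Rightarrow> complex" and lr :: real
  assumes lam1: "lam 1 = complex_of_real lr" and lr1: "1 < lr"
    and dom: "\<forall>l\<in>{2..d}. cmod (lam l) < lr" and c1: "c 1 \<noteq> 0" and dpos: "1 \<le> d"
    and gal: "\<And>P l. poly (map_poly of_int P) (lam 1) = 0 \<Longrightarrow> l \<in> {1..d} \<Longrightarrow> poly (map_poly of_int P) (lam l) = 0"
begin

abbreviation "a \<equiv> lin_rec_seq d c lam"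
definition "B = (\<Sum>l=1..d. cmod (c l))"

lemma B_nonneg: "0 \<le> B" unfolding B_def by (intro sum_nonneg) auto

lemma lam_le: "l \<in> {1..d} \<Longrightarrow> cmod (lam l) \<le> lr"
proof -
  assume l: "l \<in> {1..d}"
  show ?thesis
  proof (cases "l = 1")
    case True then show ?thesis using lam1 lr1 by simp
  next
    case False then have "l \<in> {2..d}" using l by auto
    then show ?thesis using dom by force
  qed
qed

lemma a_bound: "cmod (a k) \<le> B * lr ^ k"
proof -
  have "cmod (a k) \<le> (\<Sum>l=1..d. cmod (c l * lam l ^ k))"
    unfolding lin_rec_seq_def by (rule norm_sum)
  also have "\<dots> \<le> (\<Sum>l=1..d. cmod (c l) * lr ^ k)"
    by (intro sum_mono) (auto simp: norm_mult norm_power intro!: mult_left_mono power_mono lam_le)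
  also have "\<dots> = B * lr ^ k" by (simp add: B_def sum_distrib_right)
  finally show ?thesis .
qed

lemma Vs_sh: "Vs a (sh K ps) = (\<Sum>l=1..d. c l * lam l ^ K * Qs (lam l) ps)"
proof (induction ps)
  case Nil then show ?case by simp
next
  case (Cons x ps)
  have "of_int (fst x) * a (snd x + K) = (\<Sum>l=1..d. c l * lam l ^ K * (of_int (fst x) * lam l ^ snd x))"
    unfolding lin_rec_seq_def by (simp add: sum_distrib_left power_add algebra_simps)
  then show ?case using Cons by (simp add: sum.distrib algebra_simps)
qed

lemma Qs_zero: "Qs (lam 1) ps = 0 \<Longrightarrow> l \<in> {1..d} \<Longrightarrow> Qs (lam l) ps = 0"
  using Qs_poly[of ps] gal by metis

lemma Qs_bound:
  assumes "\<forall>x\<in>set ps. fst x \<in> {-1,1} \<and> snd x \<le> D" "l \<in> {1..d}"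
  shows "cmod (Qs (lam l) ps) \<le> real (length ps) * (1 + lr) ^ D"
  using assms(1)
proof (induction ps)
  case Nil then show ?case by simp
next
  case (Cons x ps)
  have "cmod (lam l) ^ snd x \<le> (1 + lr) ^ D"
  proof -
    have "cmod (lam l) ^ snd x \<le> (1 + lr) ^ snd x"
      using lam_le[OF assms(2)] by (intro power_mono) auto
    also have "\<dots> \<le> (1 + lr) ^ D" using Cons.prems lr1 by (intro power_increasing) auto
    finally show ?thesis .
  qed
  moreover have "cmod (of_int (fst x) :: complex) = 1" using Cons.prems by auto
  ultimately have "cmod (of_int (fst x) * lam l ^ snd x) \<le> (1 + lr) ^ D"
    by (simp add: norm_mult norm_power)
  then have "cmod (Qs (lam l) (x # ps)) \<le> (1 + lr) ^ D + cmod (Qs (lam l) ps)"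
    by (simp add: norm_triangle_le)
  with Cons show ?case by (simp add: algebra_simps)
qed

lemma cluster:
  "\<exists>\<delta>>0. \<exists>K0. \<forall>ps. length ps \<le> M \<longrightarrow> (\<forall>x\<in>set ps. fst x \<in> {-1,1} \<and> snd x \<le> D) \<longrightarrow>
     ((\<forall>K. Vs a (sh K ps) = 0) \<or> (\<forall>K\<ge>K0. \<delta> * lr ^ K \<le> cmod (Vs a (sh K ps))))"
proof -
  define Pats where "Pats = {ps. set ps \<subseteq> {-1,1::int} \<times> {0..D} \<and> length ps \<le> M}"
  have finP: "finite Pats" unfolding Pats_def by (intro finite_lists_length_le) auto
  define Z where "Z = insert 1 ((\<lambda>ps. cmod (Qs (lam 1) ps)) ` {ps\<in>Pats. Qs (lam 1) ps \<noteq> 0})"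
  have finZ: "finite Z" unfolding Z_def using finP by auto
  define \<delta>0 where "\<delta>0 = Min Z"
  have d0pos: "\<delta>0 > 0" unfolding \<delta>0_def using finZ by (subst Min_gr_iff) (auto simp: Z_def)
  have d0le: "\<delta>0 \<le> cmod (Qs (lam 1) ps)" if "ps \<in> Pats" "Qs (lam 1) ps \<noteq> 0" for ps
    unfolding \<delta>0_def using finZ that by (intro Min_le) (auto simp: Z_def)
  define \<rho> where "\<rho> = Max (insert 0 ((\<lambda>l. cmod (lam l)) ` {2..d}))"
  have rho_nn: "0 \<le> \<rho>" unfolding \<rho>_def by (intro Max_ge) auto
  have rho_lt: "\<rho> < lr" unfolding \<rho>_def using dom lr1 by (subst Max_less_iff) auto
  have rho_ge: "cmod (lam l) \<le> \<rho>" if "l \<in> {2..d}" for l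
    unfolding \<rho>_def using that by (intro Max_ge) auto
  define W where "W = real M * (1 + lr) ^ D"
  have W_nn: "0 \<le> W" unfolding W_def using lr1 by simp
  define \<delta> where "\<delta> = cmod (c 1) * \<delta>0 / 2"
  have dpos': "\<delta> > 0" unfolding \<delta>_def using c1 d0pos by simp
  have q1: "\<rho> / lr < 1" using rho_lt lr1 by simp
  have q0: "0 \<le> \<rho> / lr" using rho_nn lr1 by simp
  obtain K0 where K0: "(\<rho> / lr) ^ K0 < \<delta> / (B * W + 1)"
    using real_arch_pow_inv[OF _ q1, of "\<delta> / (B * W + 1)"] dpos' B_nonneg W_nn
    by (metis add_nonneg_pos divide_pos_pos mult_nonneg_nonneg zero_less_one)
  show ?thesis
  proof (intro exI[of _ \<delta>] conjI dpos' exI[of _ K0] allI impI)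
    fix ps :: "(int \<times> nat) list"
    assume len: "length ps \<le> M" and ps: "\<forall>x\<in>set ps. fst x \<in> {-1,1} \<and> snd x \<le> D"
    have psP: "ps \<in> Pats" unfolding Pats_def using len ps by auto
    show "(\<forall>K. Vs a (sh K ps) = 0) \<or> (\<forall>K\<ge>K0. \<delta> * lr ^ K \<le> cmod (Vs a (sh K ps)))"
    proof (cases "Qs (lam 1) ps = 0")
      case True
      then have "\<forall>l\<in>{1..d}. Qs (lam l) ps = 0" using Qs_zero by blast
      then show ?thesis by (simp add: Vs_sh)
    next
      case False
      have Qb: "cmod (Qs (lam l) ps) \<le> W" if "l \<in> {1..d}" for l
      proof -
        have "cmod (Qs (lam l) ps) \<le> real (length ps) * (1 + lr) ^ D" by (rule Qs_bound[OF ps that])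
        also have "\<dots> \<le> W" unfolding W_def using len lr1 by (intro mult_right_mono) auto
        finally show ?thesis .
      qed
      have "\<forall>K\<ge>K0. \<delta> * lr ^ K \<le> cmod (Vs a (sh K ps))"
      proof (intro allI impI)
        fix K :: nat assume KK: "K0 \<le> K"
        define R where "R = (\<Sum>l=2..d. c l * lam l ^ K * Qs (lam l) ps)"
        have split: "Vs a (sh K ps) = c 1 * lam 1 ^ K * Qs (lam 1) ps + R"
          unfolding Vs_sh R_def using dpos by (simp add: sum.atLeast_Suc_atMost numeral_2_eq_2)
        have Rb: "cmod R \<le> B * W * \<rho> ^ K"
        proof -
          have "cmod R \<le> (\<Sum>l=2..d. cmod (c l * lam l ^ K * Qs (lam l) ps))"
            unfolding R_def by (rule norm_sum)
          also have "\<dots> \<le> (\<Sum>l=2..d. cmod (c l) * (W * \<rho> ^ K))"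
          proof (intro sum_mono)
            fix l assume l: "l \<in> {2..d}"
            have "cmod (lam l) ^ K \<le> \<rho> ^ K" using rho_ge[OF l] by (intro power_mono) auto
            moreover have "cmod (Qs (lam l) ps) \<le> W" using Qb l by auto
            ultimately have "cmod (lam l) ^ K * cmod (Qs (lam l) ps) \<le> \<rho> ^ K * W"
              by (intro mult_mono) (auto simp: rho_nn)
            then show "cmod (c l * lam l ^ K * Qs (lam l) ps) \<le> cmod (c l) * (W * \<rho> ^ K)"
              by (simp add: norm_mult norm_power mult.assoc mult_left_mono mult.commute[of W])
          qed
          also have "\<dots> \<le> (\<Sum>l=1..d. cmod (c l)) * (W * \<rho> ^ K)"
            by (subst sum_distrib_right[symmetric], intro mult_right_mono sum_mono2)
               (auto simp: W_nn rho_nn)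
          finally show ?thesis by (simp add: B_def mult.assoc)
        qed
        have "(\<rho> / lr) ^ K \<le> (\<rho> / lr) ^ K0" using q0 q1 KK by (intro power_decreasing) auto
        then have rk0: "(\<rho> / lr) ^ K \<le> \<delta> / (B * W + 1)" using K0 by linarith
        have "\<rho> ^ K = lr ^ K * (\<rho> / lr) ^ K" using lr1 by (simp add: power_divide)
        also have "\<dots> \<le> lr ^ K * (\<delta> / (B * W + 1))" using rk0 lr1 by (intro mult_left_mono) auto
        finally have rk: "\<rho> ^ K \<le> lr ^ K * (\<delta> / (B * W + 1))" .
        have "B * W * \<rho> ^ K \<le> B * W * (lr ^ K * (\<delta> / (B * W + 1)))"
          using rk B_nonneg W_nn by (intro mult_left_mono) auto
        also have "\<dots> = lr ^ K * \<delta> * (B * W / (B * W + 1))" by (simp add: field_simps)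
        also have "\<dots> \<le> lr ^ K * \<delta> * 1"
        proof -
          have bw: "0 \<le> B * W" using B_nonneg W_nn by simp
          then have "B * W / (B * W + 1) \<le> 1" by (simp add: divide_le_eq)
          then show ?thesis using dpos' lr1 by (intro mult_left_mono) auto
        qed
        finally have Rb2: "cmod R \<le> \<delta> * lr ^ K" using Rb by (simp add: mult.commute)
        have "cmod (c 1 * lam 1 ^ K * Qs (lam 1) ps) = cmod (c 1) * lr ^ K * cmod (Qs (lam 1) ps)"
          using lam1 lr1 by (simp add: norm_mult norm_power)
        also have "\<dots> \<ge> cmod (c 1) * lr ^ K * \<delta>0"
          using d0le[OF psP False] lr1 by (intro mult_left_mono) auto
        finally have "2 * \<delta> * lr ^ K \<le> cmod (c 1 * lam 1 ^ K * Qs (lam 1) ps)"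
          by (simp add: \<delta>_def algebra_simps)
        moreover have "cmod (c 1 * lam 1 ^ K * Qs (lam 1) ps) \<le> cmod (Vs a (sh K ps)) + cmod R"
          using split norm_triangle_ineq4[of "Vs a (sh K ps)" R] by (simp add: algebra_simps)
        ultimately show "\<delta> * lr ^ K \<le> cmod (Vs a (sh K ps))" using Rb2 by linarith
      qed
      then show ?thesis by blast
    qed
  qed
qed

end

lemma pigeon:
  fixes R :: "nat \<Rightarrow> nat" and ts :: "(int \<times> nat) list"
  assumes Rmono: "\<And>i. R i \<le> R (Suc i)"
    and len: "length ts \<le> M" and km: "kmax \<in> snd ` set ts" and kle: "\<forall>x\<in>set ts. snd x \<le> kmax"
  shows "\<exists>i<M. \<forall>x\<in>set ts. \<not> (int kmax - int (R (Suc i)) \<le> int (snd x) \<and> int (snd x) < int kmax - int (R i))"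
proof (rule ccontr)
  assume "\<not> ?thesis"
  then have "\<forall>i<M. \<exists>k. k \<in> snd ` set ts \<and> int kmax - int (R (Suc i)) \<le> int k \<and> int k < int kmax - int (R i)"
    by auto
  then obtain f where f: "\<And>i. i < M \<Longrightarrow> f i \<in> snd ` set ts \<and> int kmax - int (R (Suc i)) \<le> int (f i) \<and> int (f i) < int kmax - int (R i)"
    by metis
  have Rm: "R i \<le> R j" if "i \<le> j" for i j using lift_Suc_mono_le[of R, OF Rmono that] .
  have lt: "f j < f i" if "i < j" "j < M" for i j
  proof -
    have "int (f j) < int kmax - int (R j)" using f[of j] that by auto
    also have "\<dots> \<le> int kmax - int (R (Suc i))" using Rm[of "Suc i" j] that by auto
    also have "\<dots> \<le> int (f i)" using f[of i] that by auto
    finally show ?thesis by simp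
  qed
  have inj: "inj_on f {..<M}"
  proof (rule inj_onI)
    fix i j assume "i \<in> {..<M}" "j \<in> {..<M}" "f i = f j"
    then show "i = j" using lt[of i j] lt[of j i] by (cases i j rule: linorder_cases) auto
  qed
  have sub: "f ` {..<M} \<subseteq> snd ` set ts - {kmax}"
  proof
    fix y assume "y \<in> f ` {..<M}"
    then obtain i where i: "i < M" "y = f i" by auto
    then have "int y < int kmax" using f[of i] by auto
    then show "y \<in> snd ` set ts - {kmax}" using f[of i] i by auto
  qed
  have "M = card (f ` {..<M})" using card_image[OF inj] by simp
  also have "\<dots> \<le> card (snd ` set ts - {kmax})" by (intro card_mono sub) auto
  also have "\<dots> = card (snd ` set ts) - 1" using km by simp
  also have "\<dots> \<le> length ts - 1"
    using card_image_le[of "set ts" snd] card_length[of ts] by simp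
  finally show False using len km by (cases ts) auto
qed

context NT
begin

definition "CL M D \<delta> K0 \<longleftrightarrow> \<delta> > 0 \<and> (\<forall>ps. length ps \<le> M \<longrightarrow> (\<forall>x\<in>set ps. fst x \<in> {-1,1} \<and> snd x \<le> D) \<longrightarrow>
     ((\<forall>K. Vs a (sh K ps) = 0) \<or> (\<forall>K\<ge>K0. \<delta> * lr ^ K \<le> cmod (Vs a (sh K ps)))))"

definition "dk M D = (SOME p. CL M D (fst p) (snd p))"
definition "dl M D = fst (dk M D)"
definition "kl M D = snd (dk M D)"

lemma CL: "CL M D (dl M D) (kl M D)"
proof -
  have "\<exists>p. CL M D (fst p) (snd p)" using cluster[of M D] unfolding CL_def by auto
  then show ?thesis unfolding dl_def kl_def dk_def by (rule someI_ex)
qed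

lemma dl_pos: "dl M D > 0" using CL unfolding CL_def by auto

definition "Ef M D = (SOME E. real M * B < dl M D * lr ^ E)"

lemma Ef: "real M * B < dl M D * lr ^ Ef M D"
proof -
  obtain E where "real M * B / dl M D < lr ^ E" using real_arch_pow[OF lr1] by blast
  then have "real M * B < dl M D * lr ^ E" using dl_pos[of M D] by (simp add: field_simps)
  then show ?thesis unfolding Ef_def by (rule someI)
qed

primrec R :: "nat \<Rightarrow> nat \<Rightarrow> nat" where
  "R M 0 = 0"
| "R M (Suc i) = R M i + Ef M (R M i)"

definition "H M = (\<Sum>i<M. kl M (R M i))"
definition "G M = H M + R M M + 1"

lemma R_mono: "R M i \<le> R M (Suc i)" by simp
lemma R_mono': "i \<le> j \<Longrightarrow> R M i \<le> R M j" using lift_Suc_mono_le[of "R M", OF R_mono] by blast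

lemma kl_le_H: "i < M \<Longrightarrow> kl M (R M i) \<le> H M"
  unfolding H_def by (rule member_le_sum) auto

lemma Vs_bound:
  assumes "\<forall>x\<in>set ts. fst x \<in> {-1,1} \<and> B * lr ^ snd x \<le> Y"
  shows "cmod (Vs a ts) \<le> real (length ts) * Y"
  using assms
proof (induction ts)
  case Nil then show ?case by simp
next
  case (Cons x ts)
  have "cmod (of_int (fst x) * a (snd x)) = cmod (a (snd x))" using Cons.prems by (auto simp: norm_mult)
  also have "\<dots> \<le> Y" using a_bound[of "snd x"] Cons.prems by auto
  finally have "cmod (Vs a (x # ts)) \<le> Y + cmod (Vs a ts)" by (simp add: norm_triangle_le)
  with Cons show ?case by (simp add: algebra_simps)
qed

lemma sh_sh: "sh s (sh t ts) = sh (t + s) ts" by (induction ts) auto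

lemma peel:
  fixes ts :: "(int \<times> nat) list" and kmax i M Kb :: nat
  defines "tp \<equiv> filter (\<lambda>x. int kmax - int (R M i) \<le> int (snd x)) ts"
  defines "rs \<equiv> filter (\<lambda>x. \<not> int kmax - int (R M i) \<le> int (snd x)) ts"
  assumes len: "length ts \<le> M" and sg: "\<forall>x\<in>set ts. fst x \<in> {-1,1}"
    and kle: "\<forall>x\<in>set ts. snd x \<le> kmax"
    and ann: "\<forall>x\<in>set ts. \<not> (int kmax - int (R M (Suc i)) \<le> int (snd x) \<and> int (snd x) < int kmax - int (R M i))"
    and kb1: "\<forall>x\<in>set tp. Kb \<le> snd x" and kb2: "int kmax - int (R M i) \<le> int Kb"
    and kb3: "kl M (R M i) \<le> Kb"
  shows "(Vs a ts = 0 \<longleftrightarrow> Vs a tp = 0 \<and> Vs a rs = 0) \<and> (\<forall>s. Vs a tp = 0 \<longleftrightarrow> Vs a (sh s tp) = 0)"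
proof -
  define ps where "ps = map (\<lambda>x. (fst x, snd x - Kb)) tp"
  have tp_eq: "sh Kb ps = tp" unfolding ps_def sh_def using kb1 by (induction tp) auto
  have lps: "length ps \<le> M" unfolding ps_def tp_def using len by (simp add: order_trans[OF length_filter_le])
  have pps: "\<forall>x\<in>set ps. fst x \<in> {-1,1} \<and> snd x \<le> R M i"
    unfolding ps_def tp_def using sg kle kb2 by auto
  have cl: "(\<forall>K. Vs a (sh K ps) = 0) \<or> (\<forall>K\<ge>kl M (R M i). dl M (R M i) * lr ^ K \<le> cmod (Vs a (sh K ps)))"
    using CL[of M "R M i"] lps pps unfolding CL_def by blast
  have tsplit: "Vs a ts = Vs a tp + Vs a rs" unfolding tp_def rs_def by (rule Vs_filter)
  show ?thesis
  proof (cases "\<forall>K. Vs a (sh K ps) = 0")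
    case True
    have "Vs a tp = 0" using True[rule_format, of Kb] tp_eq by simp
    moreover have "Vs a (sh s tp) = 0" for s using True[rule_format, of "Kb + s"] tp_eq sh_sh[of s Kb ps] by simp
    ultimately show ?thesis using tsplit by auto
  next
    case False
    let ?\<delta> = "dl M (R M i)"
    have big: "?\<delta> * lr ^ K \<le> cmod (Vs a (sh K ps))" if "K \<ge> Kb" for K
      using cl False kb3 that by auto
    have dp: "?\<delta> > 0" by (rule dl_pos)
    have nz: "Vs a (sh s tp) \<noteq> 0" for s
    proof -
      have "0 < ?\<delta> * lr ^ (Kb + s)" using dp lr1 by simp
      also have "\<dots> \<le> cmod (Vs a (sh (Kb + s) ps))" by (rule big) simp
      finally show ?thesis using tp_eq sh_sh[of s Kb ps] by auto
    qed
    have tpnz: "Vs a tp \<noteq> 0" using nz[of 0] by (simp add: sh_def)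
    have tpbig: "?\<delta> * lr ^ Kb \<le> cmod (Vs a tp)" using big[of Kb] tp_eq by simp
    let ?E = "Ef M (R M i)"
    have rssmall: "cmod (Vs a rs) < ?\<delta> * lr ^ Kb"
    proof -
      have "\<forall>x\<in>set rs. fst x \<in> {-1,1} \<and> B * lr ^ snd x \<le> B * (lr ^ Kb / lr ^ ?E)"
      proof
        fix x assume x: "x \<in> set rs"
        then have "int (snd x) < int kmax - int (R M (Suc i))" using ann unfolding rs_def by auto
        then have "snd x + ?E \<le> Kb" using kb2 by simp
        then have "lr ^ snd x * lr ^ ?E \<le> lr ^ Kb"
          using lr1 by (simp add: power_add[symmetric] power_increasing)
        then have "lr ^ snd x \<le> lr ^ Kb / lr ^ ?E" using lr1 by (simp add: field_simps)
        then show "fst x \<in> {-1,1} \<and> B * lr ^ snd x \<le> B * (lr ^ Kb / lr ^ ?E)"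
          using x sg B_nonneg mult_left_mono[of "lr ^ snd x" "lr ^ Kb / lr ^ ?E" B] unfolding rs_def by auto
      qed
      then have "cmod (Vs a rs) \<le> real (length rs) * (B * (lr ^ Kb / lr ^ ?E))" by (rule Vs_bound)
      also have "\<dots> \<le> real M * (B * (lr ^ Kb / lr ^ ?E))"
        using len lr1 B_nonneg unfolding rs_def
        by (intro mult_right_mono) (auto simp: order_trans[OF length_filter_le])
      also have "\<dots> = (real M * B) * (lr ^ Kb / lr ^ ?E)" by simp
      also have "\<dots> < (?\<delta> * lr ^ ?E) * (lr ^ Kb / lr ^ ?E)"
        using Ef[of M "R M i"] lr1 by (intro mult_strict_right_mono) auto
      also have "\<dots> = ?\<delta> * lr ^ Kb" using lr1 by simp
      finally show ?thesis .
    qed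
    have "Vs a ts \<noteq> 0"
    proof
      assume "Vs a ts = 0"
      then have "Vs a tp = - Vs a rs" using tsplit by (simp add: eq_neg_iff_add_eq_0)
      then have "cmod (Vs a tp) = cmod (Vs a rs)" by simp
      then show False using tpbig rssmall by simp
    qed
    then show ?thesis using tpnz nz by auto
  qed
qed

end

lemma filter_sh: "filter P (sh s ts) = sh s (filter (\<lambda>x. P (fst x, snd x + s)) ts)"
  by (induction ts) auto

lemma set_sh: "set (sh s ts) = (\<lambda>x. (fst x, snd x + s)) ` set ts"
  by (simp add: sh_def)

context NT
begin

lemma peel_setup:
  fixes ts :: "(int \<times> nat) list"
  assumes len: "length ts \<le> M" and ne: "ts \<noteq> []"
  obtains i kmax where "i < M" "kmax \<in> snd ` set ts" "\<forall>x\<in>set ts. snd x \<le> kmax"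
    "\<forall>x\<in>set ts. \<not> (int kmax - int (R M (Suc i)) \<le> int (snd x) \<and> int (snd x) < int kmax - int (R M i))"
proof -
  define kmax where "kmax = Max (snd ` set ts)"
  have km: "kmax \<in> snd ` set ts" unfolding kmax_def using ne by (intro Max_in) auto
  have kle: "\<forall>x\<in>set ts. snd x \<le> kmax" unfolding kmax_def by auto
  obtain i where "i < M" "\<forall>x\<in>set ts. \<not> (int kmax - int (R M (Suc i)) \<le> int (snd x) \<and> int (snd x) < int kmax - int (R M i))"
    using pigeon[of "R M", OF R_mono len km kle] by blast
  then show ?thesis using that km kle by blast
qed

lemma shift_inv:
  "length ts \<le> M \<Longrightarrow> (\<forall>x\<in>set ts. fst x \<in> {-1,1} \<and> H M \<le> snd x) \<Longrightarrow> (Vs a ts = 0 \<longleftrightarrow> Vs a (sh s ts) = 0)"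
proof (induction "length ts" arbitrary: ts rule: less_induct)
  case less
  show ?case
  proof (cases "ts = []")
    case True then show ?thesis by simp
  next
    case False
    obtain i kmax where i: "i < M" and km: "kmax \<in> snd ` set ts" and kle: "\<forall>x\<in>set ts. snd x \<le> kmax"
      and ann: "\<forall>x\<in>set ts. \<not> (int kmax - int (R M (Suc i)) \<le> int (snd x) \<and> int (snd x) < int kmax - int (R M i))"
      using peel_setup[OF less.prems(1) False] by blast
    define P where "P = (\<lambda>x::int\<times>nat. int kmax - int (R M i) \<le> int (snd x))"
    define tp where "tp = filter P ts"
    define rs where "rs = filter (\<lambda>x. \<not> P x) ts"
    have tpne: "tp \<noteq> []" using km unfolding tp_def P_def by (force simp: filter_empty_conv)
    define Kb where "Kb = Min (snd ` set tp)"
    have Kbin: "Kb \<in> snd ` set tp" unfolding Kb_def using tpne by (intro Min_in) auto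
    have kb1: "\<forall>x\<in>set tp. Kb \<le> snd x" unfolding Kb_def by auto
    have kb2: "int kmax - int (R M i) \<le> int Kb" using Kbin unfolding tp_def P_def by auto
    have kb3: "kl M (R M i) \<le> Kb" using kl_le_H[OF i] Kbin less.prems(2) unfolding tp_def by auto
    have sg: "\<forall>x\<in>set ts. fst x \<in> {-1,1}" using less.prems(2) by auto
    have pe1: "(Vs a ts = 0 \<longleftrightarrow> Vs a tp = 0 \<and> Vs a rs = 0) \<and> (\<forall>s. Vs a tp = 0 \<longleftrightarrow> Vs a (sh s tp) = 0)"
      using peel[OF less.prems(1) sg kle ann _ kb2 kb3] kb1 unfolding tp_def rs_def P_def by blast
    have tp': "filter (\<lambda>x. int (kmax + s) - int (R M i) \<le> int (snd x)) (sh s ts) = sh s tp"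
      unfolding tp_def P_def by (simp add: filter_sh)
    have rs': "filter (\<lambda>x. \<not> int (kmax + s) - int (R M i) \<le> int (snd x)) (sh s ts) = sh s rs"
      unfolding rs_def P_def by (simp add: filter_sh)
    have pe2: "(Vs a (sh s ts) = 0 \<longleftrightarrow> Vs a (sh s tp) = 0 \<and> Vs a (sh s rs) = 0)"
    proof -
      have l2: "length (sh s ts) \<le> M" using less.prems(1) by simp
      have sg2: "\<forall>x\<in>set (sh s ts). fst x \<in> {-1,1}" using sg by (auto simp: set_sh)
      have kle2: "\<forall>x\<in>set (sh s ts). snd x \<le> kmax + s" using kle by (auto simp: set_sh)
      have ann2: "\<forall>x\<in>set (sh s ts). \<not> (int (kmax + s) - int (R M (Suc i)) \<le> int (snd x) \<and> int (snd x) < int (kmax + s) - int (R M i))"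
        using ann by (auto simp: set_sh)
      have kb1': "\<forall>x\<in>set (sh s tp). Kb + s \<le> snd x" using kb1 by (auto simp: set_sh)
      have kb2': "int (kmax + s) - int (R M i) \<le> int (Kb + s)" using kb2 by simp
      have kb3': "kl M (R M i) \<le> Kb + s" using kb3 by simp
      have kb1'': "\<forall>x\<in>set (filter (\<lambda>x. int (kmax + s) - int (R M i) \<le> int (snd x)) (sh s ts)). Kb + s \<le> snd x"
        unfolding tp' by (rule kb1')
      show ?thesis using peel[OF l2 sg2 kle2 ann2 kb1'' kb2' kb3'] unfolding tp' rs' by blast
    qed
    have lenrs: "length rs < length ts"
      using tpne sum_length_filter_compl[of P ts] unfolding tp_def rs_def by (cases "filter P ts") auto
    have lr: "length rs \<le> M" using lenrs less.prems(1) by simp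
    have sr: "\<forall>x\<in>set rs. fst x \<in> {-1,1} \<and> H M \<le> snd x" using less.prems(2) unfolding rs_def by auto
    have IH: "Vs a rs = 0 \<longleftrightarrow> Vs a (sh s rs) = 0"
      using less.hyps[OF lenrs lr sr] .
    show ?thesis using pe1 pe2 IH by blast
  qed
qed

lemma split_zero:
  "length ts \<le> M \<Longrightarrow> (\<forall>x\<in>set ts. fst x \<in> {-1,1} \<and> (snd x \<le> r \<or> r + G M \<le> snd x)) \<Longrightarrow> Vs a ts = 0
   \<Longrightarrow> Vs a (filter (\<lambda>x. r + G M \<le> snd x) ts) = 0"
proof (induction "length ts" arbitrary: ts rule: less_induct)
  case less
  define hi where "hi = (\<lambda>x::int\<times>nat. r + G M \<le> snd x)"
  show ?case
  proof (cases "filter hi ts = []")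
    case True then show ?thesis unfolding hi_def by simp
  next
    case False
    then have ne: "ts \<noteq> []" by auto
    obtain i kmax where i: "i < M" and km: "kmax \<in> snd ` set ts" and kle: "\<forall>x\<in>set ts. snd x \<le> kmax"
      and ann: "\<forall>x\<in>set ts. \<not> (int kmax - int (R M (Suc i)) \<le> int (snd x) \<and> int (snd x) < int kmax - int (R M i))"
      using peel_setup[OF less.prems(1) ne] by blast
    obtain y where y: "y \<in> set ts" "hi y" using False by (auto simp: filter_empty_conv)
    have kbig: "r + G M \<le> kmax" using y kle unfolding hi_def by force
    have Ri: "R M i \<le> R M M" using R_mono'[of i M M] i by simp
    define P where "P = (\<lambda>x::int\<times>nat. int kmax - int (R M i) \<le> int (snd x))"
    define tp where "tp = filter P ts"
    define rs where "rs = filter (\<lambda>x. \<not> P x) ts"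
    have Phi: "hi x" if "x \<in> set ts" "P x" for x
    proof -
      have "int (snd x) \<ge> int kmax - int (R M i)" using that(2) unfolding P_def by simp
      moreover have "int kmax - int (R M i) > int r" using kbig Ri unfolding G_def by simp
      ultimately have "\<not> snd x \<le> r" by simp
      then show ?thesis using less.prems(2) that(1) unfolding hi_def by auto
    qed
    have tpne: "tp \<noteq> []" using km unfolding tp_def P_def by (force simp: filter_empty_conv)
    define Kb where "Kb = Min (snd ` set tp)"
    have Kbin: "Kb \<in> snd ` set tp" unfolding Kb_def using tpne by (intro Min_in) auto
    have kb1: "\<forall>x\<in>set tp. Kb \<le> snd x" unfolding Kb_def by auto
    have kb2: "int kmax - int (R M i) \<le> int Kb" using Kbin unfolding tp_def P_def by auto
    obtain x where x: "x \<in> set tp" "snd x = Kb" using Kbin by auto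
    then have "hi x" using Phi unfolding tp_def by auto
    then have "r + G M \<le> Kb" using x unfolding hi_def by auto
    then have kb3: "kl M (R M i) \<le> Kb" using kl_le_H[OF i] unfolding G_def by simp
    have sg: "\<forall>x\<in>set ts. fst x \<in> {-1,1}" using less.prems(2) by auto
    have pe1: "Vs a ts = 0 \<longleftrightarrow> Vs a tp = 0 \<and> Vs a rs = 0"
      using peel[OF less.prems(1) sg kle ann _ kb2 kb3] kb1 unfolding tp_def rs_def P_def by blast
    then have z: "Vs a tp = 0" "Vs a rs = 0" using less.prems(3) by auto
    have lenrs: "length rs < length ts"
      using tpne sum_length_filter_compl[of P ts] unfolding tp_def rs_def by (cases "filter P ts") auto
    have lr: "length rs \<le> M" using lenrs less.prems(1) by simp
    have sr: "\<forall>x\<in>set rs. fst x \<in> {-1,1} \<and> (snd x \<le> r \<or> r + G M \<le> snd x)" using less.prems(2) unfolding rs_def by auto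
    have IH: "Vs a (filter hi rs) = 0"
      using less.hyps[OF lenrs lr sr z(2)] unfolding hi_def .
    have e1: "filter P (filter hi ts) = tp" unfolding tp_def using Phi
      by (simp add: filter_filter) (metis (mono_tags, lifting) filter_cong)
    have e2: "filter (\<lambda>x. \<not> P x) (filter hi ts) = filter hi rs" unfolding rs_def
      by (simp add: filter_filter conj_commute)
    have "Vs a (filter hi ts) = Vs a tp + Vs a (filter hi rs)"
      using Vs_filter[of a "filter hi ts" P] e1 e2 by simp
    then show ?thesis using z IH unfolding hi_def by simp
  qed
qed

end

definition su :: "nat \<Rightarrow> (real \<Rightarrow> real) \<Rightarrow> bool" where
  "su n f \<longleftrightarrow> (\<forall>k\<le>n. \<forall>x. (deriv ^^ k) f differentiable at x)"

definition smooth :: "(real \<Rightarrow> real) \<Rightarrow> bool" where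
  "smooth f \<longleftrightarrow> (\<forall>n. su n f)"

lemma su_mono: "su n f \<Longrightarrow> m \<le> n \<Longrightarrow> su m f"
  unfolding su_def by auto

lemma su_D: "su n f \<Longrightarrow> k \<le> n \<Longrightarrow> ((deriv ^^ k) f has_real_derivative (deriv ^^ Suc k) f x) (at x)"
  unfolding su_def by (auto simp: DERIV_deriv_iff_real_differentiable[symmetric])

lemma su_Suc: "su (Suc n) f \<longleftrightarrow> (\<forall>x. f differentiable at x) \<and> su n (deriv f)"
proof -
  have e: "(deriv ^^ k) (deriv f) = (deriv ^^ Suc k) f" for k by (simp only: funpow_Suc_right o_def)
  show ?thesis unfolding su_def
  proof safe
    fix k x assume "\<forall>k\<le>Suc n. \<forall>x. (deriv ^^ k) f differentiable at x" "k \<le> n"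
    then show "(deriv ^^ k) (deriv f) differentiable at x" unfolding e by auto
  next
    fix x assume "\<forall>k\<le>Suc n. \<forall>x. (deriv ^^ k) f differentiable at x"
    then have "(deriv ^^ 0) f differentiable at x" by blast
    then show "f differentiable at x" by simp
  next
    fix k x assume a: "\<forall>x. f differentiable at x" "\<forall>k\<le>n. \<forall>x. (deriv ^^ k) (deriv f) differentiable at x" "k \<le> Suc n"
    show "(deriv ^^ k) f differentiable at x"
    proof (cases k)
      case 0 then show ?thesis using a by simp
    next
      case (Suc j) then show ?thesis using a e[of j] by auto
    qed
  qed
qed

lemma smooth_su: "smooth f \<Longrightarrow> su n f" unfolding smooth_def by auto

lemma smooth_deriv_iff: "smooth f \<longleftrightarrow> (\<forall>x. f differentiable at x) \<and> smooth (deriv f)"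
  unfolding smooth_def
proof safe
  fix x assume "\<forall>n. su n f" then show "f differentiable at x" using su_Suc[of 0 f] by auto
next
  fix n assume "\<forall>n. su n f" then show "su n (deriv f)" using su_Suc[of n f] by auto
next
  fix n assume "\<forall>x. f differentiable at x" "\<forall>n. su n (deriv f)"
  then show "su n f" using su_Suc[of n f] su_mono[of "Suc n" f n] by auto
qed

lemma higher_deriv_add_su:
  assumes "su n f" "su n g" "k \<le> n"
  shows "(deriv ^^ k) (\<lambda>x. f x + g x) = (\<lambda>x. (deriv ^^ k) f x + (deriv ^^ k) g x)"
  using assms(3)
proof (induction k)
  case 0 then show ?case by simp
next
  case (Suc k)
  have "(deriv ^^ Suc k) (\<lambda>x. f x + g x) = deriv (\<lambda>x. (deriv ^^ k) f x + (deriv ^^ k) g x)"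
    using Suc by simp
  also have "\<dots> = (\<lambda>x. (deriv ^^ Suc k) f x + (deriv ^^ Suc k) g x)"
  proof
    fix x
    have "((\<lambda>x. (deriv ^^ k) f x + (deriv ^^ k) g x) has_real_derivative (deriv ^^ Suc k) f x + (deriv ^^ Suc k) g x) (at x)"
      using su_D[OF assms(1), of k x] su_D[OF assms(2), of k x] Suc by (intro DERIV_add) auto
    then show "deriv (\<lambda>x. (deriv ^^ k) f x + (deriv ^^ k) g x) x = (deriv ^^ Suc k) f x + (deriv ^^ Suc k) g x"
      by (rule DERIV_imp_deriv)
  qed
  finally show ?case .
qed

lemma su_add: assumes "su n f" "su n g" shows "su n (\<lambda>x. f x + g x)"
  unfolding su_def
proof (intro allI impI)
  fix k x assume k: "k \<le> n"
  have "(deriv ^^ k) f differentiable at x" "(deriv ^^ k) g differentiable at x" using assms k unfolding su_def by blast+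
  then show "(deriv ^^ k) (\<lambda>x. f x + g x) differentiable at x"
    unfolding higher_deriv_add_su[OF assms k] by (rule differentiable_add)
qed

lemma higher_deriv_minus_su:
  assumes "su n f" "k \<le> n"
  shows "(deriv ^^ k) (\<lambda>x. - f x) = (\<lambda>x. - (deriv ^^ k) f x)"
  using assms(2)
proof (induction k)
  case 0 then show ?case by simp
next
  case (Suc k)
  have "(deriv ^^ Suc k) (\<lambda>x. - f x) = deriv (\<lambda>x. - (deriv ^^ k) f x)"
    using Suc by simp
  also have "\<dots> = (\<lambda>x. - (deriv ^^ Suc k) f x)"
  proof
    fix x
    have "((\<lambda>x. - (deriv ^^ k) f x) has_real_derivative - (deriv ^^ Suc k) f x) (at x)"
      using su_D[OF assms(1), of k x] Suc by (intro DERIV_minus) auto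
    then show "deriv (\<lambda>x. - (deriv ^^ k) f x) x = - (deriv ^^ Suc k) f x"
      by (rule DERIV_imp_deriv)
  qed
  finally show ?case .
qed

lemma su_minus: assumes "su n f" shows "su n (\<lambda>x. - f x)"
  unfolding su_def
proof (intro allI impI)
  fix k x assume k: "k \<le> n"
  have "(deriv ^^ k) f differentiable at x" using assms k unfolding su_def by blast
  then show "(deriv ^^ k) (\<lambda>x. - f x) differentiable at x"
    unfolding higher_deriv_minus_su[OF assms k] by (rule differentiable_minus)
qed

lemma Suc_choose': "Suc n choose k = (n choose k) + (if k = 0 then 0 else (n choose (k-1)))"
  by (cases k) simp_all

lemma higher_deriv_mult_su:
  assumes "su n f" "su n g" "k \<le> n"
  shows "(deriv ^^ k) (\<lambda>x. f x * g x) = (\<lambda>x. \<Sum>i = 0..k. real (k choose i) * (deriv ^^ i) f x * (deriv ^^ (k-i)) g x)"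
  using assms(3)
proof (induction k)
  case 0 then show ?case by simp
next
  case (Suc n')
  have df: "\<And>i x. i \<le> n' \<Longrightarrow> ((deriv ^^ i) f has_real_derivative (deriv ^^ Suc i) f x) (at x)"
    using su_D[OF assms(1)] Suc.prems by auto
  have dg: "\<And>i x. i \<le> n' \<Longrightarrow> ((deriv ^^ i) g has_real_derivative (deriv ^^ Suc i) g x) (at x)"
    using su_D[OF assms(2)] Suc.prems by auto
  have "(deriv ^^ Suc n') (\<lambda>x. f x * g x) = deriv ((deriv ^^ n') (\<lambda>x. f x * g x))" by simp
  also have "\<dots> = deriv (\<lambda>x. \<Sum>i = 0..n'. real (n' choose i) * (deriv ^^ i) f x * (deriv ^^ (n'-i)) g x)"
    using Suc by simp
  also have "\<dots> = (\<lambda>x. \<Sum>i = 0..Suc n'. real (Suc n' choose i) * (deriv ^^ i) f x * (deriv ^^ (Suc n'-i)) g x)"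
  proof
    fix z
    have sumeq: "(\<Sum>i = 0..n'.
               real (n' choose i) * (deriv ((deriv ^^ i) f) z * (deriv ^^ (n'-i)) g z + deriv ((deriv ^^ (n'-i)) g) z * (deriv ^^ i) f z)) =
            g z * deriv ((deriv ^^ n') f) z + (\<Sum>i = 0..n'. (deriv ^^ i) f z * (real (Suc n' choose i) * (deriv ^^ (Suc n' - i)) g z))"
    apply (simp add: Suc_choose' algebra_simps sum.distrib)
    apply (subst (4) sum_Suc_reindex)
    apply (auto simp: algebra_simps Suc_diff_le intro: sum.cong)
    done
    have "((\<lambda>x. \<Sum>i = 0..n'. real (n' choose i) * (deriv ^^ i) f x * (deriv ^^ (n'-i)) g x) has_real_derivative
         (\<Sum>i = 0..n'. real (n' choose i) * ((deriv ^^ Suc i) f z * (deriv ^^ (n'-i)) g z + (deriv ^^ Suc (n'-i)) g z * (deriv ^^ i) f z))) (at z)"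
      proof (rule DERIV_sum)
      fix i assume i: "i \<in> {0..n'}"
      have "((\<lambda>x. real (n' choose i) * ((deriv ^^ i) f x * (deriv ^^ (n'-i)) g x)) has_real_derivative
         real (n' choose i) * ((deriv ^^ i) f z * (deriv ^^ Suc (n'-i)) g z + (deriv ^^ Suc i) f z * (deriv ^^ (n'-i)) g z)) (at z)"
      proof -
        have d1: "((deriv ^^ i) f has_real_derivative (deriv ^^ Suc i) f z) (at z)" using df i by auto
        have d2: "((deriv ^^ (n'-i)) g has_real_derivative (deriv ^^ Suc (n'-i)) g z) (at z)" using dg i by auto
        show ?thesis using DERIV_cmult[OF DERIV_mult[OF d1 d2], of "real (n' choose i)"]
          by (simp add: algebra_simps del: funpow.simps)
      qed
      then show "((\<lambda>x. real (n' choose i) * (deriv ^^ i) f x * (deriv ^^ (n'-i)) g x) has_real_derivative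
         real (n' choose i) * ((deriv ^^ Suc i) f z * (deriv ^^ (n'-i)) g z + (deriv ^^ Suc (n'-i)) g z * (deriv ^^ i) f z)) (at z)"
        by (simp add: algebra_simps del: funpow.simps)
    qed
    moreover have "(\<Sum>i = 0..n'. real (n' choose i) * ((deriv ^^ Suc i) f z * (deriv ^^ (n'-i)) g z + (deriv ^^ Suc (n'-i)) g z * (deriv ^^ i) f z))
       = (\<Sum>i = 0..Suc n'. real (Suc n' choose i) * (deriv ^^ i) f z * (deriv ^^ (Suc n'-i)) g z)"
      using sumeq by (simp add: algebra_simps Suc_diff_le)
    ultimately have "((\<lambda>x. \<Sum>i = 0..n'. real (n' choose i) * (deriv ^^ i) f x * (deriv ^^ (n'-i)) g x) has_real_derivative
         (\<Sum>i = 0..Suc n'. real (Suc n' choose i) * (deriv ^^ i) f z * (deriv ^^ (Suc n'-i)) g z)) (at z)"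
      by (simp only:)
    then show "deriv (\<lambda>x. \<Sum>i = 0..n'. real (n' choose i) * (deriv ^^ i) f x * (deriv ^^ (n'-i)) g x) z
       = (\<Sum>i = 0..Suc n'. real (Suc n' choose i) * (deriv ^^ i) f z * (deriv ^^ (Suc n'-i)) g z)"
      by (rule DERIV_imp_deriv)
  qed
  finally show ?case .
qed


lemma su_mult: assumes "su n f" "su n g" shows "su n (\<lambda>x. f x * g x)"
  unfolding su_def
proof (intro allI impI)
  fix k x assume k: "k \<le> n"
  have "(\<lambda>x. \<Sum>i = 0..k. real (k choose i) * (deriv ^^ i) f x * (deriv ^^ (k-i)) g x) differentiable at x"
  proof (intro differentiable_sum ballI differentiable_mult differentiable_const)
    fix i assume "i \<in> {0..k}"
    then show "(deriv ^^ i) f differentiable at x" "(deriv ^^ (k-i)) g differentiable at x"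
      using assms k unfolding su_def by auto
  qed simp
  then show "(deriv ^^ k) (\<lambda>x. f x * g x) differentiable at x"
    unfolding higher_deriv_mult_su[OF assms k] .
qed

lemma smooth_mult: "smooth f \<Longrightarrow> smooth g \<Longrightarrow> smooth (\<lambda>x. f x * g x)"
  unfolding smooth_def using su_mult by blast

lemma smooth_add: "smooth f \<Longrightarrow> smooth g \<Longrightarrow> smooth (\<lambda>x. f x + g x)"
  unfolding smooth_def using su_add by blast

lemma higher_deriv_add_smooth:
  "smooth f \<Longrightarrow> smooth g \<Longrightarrow> (deriv ^^ k) (\<lambda>x. f x + g x) x = (deriv ^^ k) f x + (deriv ^^ k) g x"
  using higher_deriv_add_su[of k f g k] unfolding smooth_def by auto

lemma higher_deriv_mult_smooth:
  "smooth f \<Longrightarrow> smooth g \<Longrightarrow> (deriv ^^ k) (\<lambda>x. f x * g x) x = (\<Sum>i = 0..k. real (k choose i) * (deriv ^^ i) f x * (deriv ^^ (k-i)) g x)"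
  using higher_deriv_mult_su[of k f g k] unfolding smooth_def by auto

lemma smooth_D0: "smooth f \<Longrightarrow> (f has_real_derivative deriv f x) (at x)"
  using su_D[OF smooth_su[of f 0], of 0 x] by simp

lemma smooth_inverse:
  assumes F: "smooth F" and pos: "\<And>x. F x > 0"
  shows "smooth (\<lambda>x. inverse (F x))"
proof -
  define g where "g = (\<lambda>x. inverse (F x))"
  have Fd: "(F has_real_derivative deriv F x) (at x)" for x
    using smooth_D0[OF F] .
  have gd: "(g has_real_derivative - (deriv F x * (g x * g x))) (at x)" for x
    unfolding g_def using DERIV_inverse_fun[OF Fd[of x]] pos[of x] by (simp add: power2_eq_square)
  have dg: "deriv g = (\<lambda>x. - (deriv F x * (g x * g x)))"
    using gd by (intro ext DERIV_imp_deriv)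
  have gdiff: "\<forall>x. g differentiable at x" using gd by (auto simp: real_differentiable_def)
  have dF: "smooth (deriv F)" using F smooth_deriv_iff by blast
  have "su n g" for n
  proof (induction n)
    case 0 then show ?case using gdiff unfolding su_def by auto
  next
    case (Suc n)
    have "su n (\<lambda>x. - (deriv F x * (g x * g x)))"
      by (intro su_minus su_mult Suc smooth_su[OF dF])
    then show ?case unfolding su_Suc dg using gdiff by auto
  qed
  then show ?thesis unfolding smooth_def g_def by auto
qed

lemma smooth_ln:
  assumes F: "smooth F" and pos: "\<And>x. F x > 0"
  shows "smooth (\<lambda>x. ln (F x))" and "deriv (\<lambda>x. ln (F x)) = (\<lambda>x. deriv F x * inverse (F x))"
proof -
  have Fd: "(F has_real_derivative deriv F x) (at x)" for x
    using smooth_D0[OF F] .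
  have Ld: "((\<lambda>x. ln (F x)) has_real_derivative deriv F x * inverse (F x)) (at x)" for x
    using DERIV_chain2[OF DERIV_ln[OF pos[of x]] Fd[of x]] by (simp add: mult.commute)
  show dL: "deriv (\<lambda>x. ln (F x)) = (\<lambda>x. deriv F x * inverse (F x))"
    using Ld by (intro ext DERIV_imp_deriv)
  have "smooth (deriv F)" using F smooth_deriv_iff by blast
  then have "smooth (\<lambda>x. deriv F x * inverse (F x))"
    using smooth_inverse[OF F pos] smooth_mult by blast
  then have s1: "smooth (deriv (\<lambda>x. ln (F x)))" unfolding dL .
  have s2: "\<forall>x. (\<lambda>x. ln (F x)) differentiable at x" using Ld by (auto simp: real_differentiable_def)
  show "smooth (\<lambda>x. ln (F x))" using smooth_deriv_iff[of "\<lambda>x. ln (F x)"] s1 s2 by blast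
qed

lemma cumulant_rec:
  assumes F: "smooth F" and pos: "\<And>x. F x > 0"
  shows "(deriv ^^ Suc n) F x = (\<Sum>i = 0..n. real (n choose i) * (deriv ^^ i) F x * (deriv ^^ Suc (n-i)) (\<lambda>x. ln (F x)) x)"
proof -
  define L where "L = (\<lambda>x. ln (F x))"
  have sL: "smooth L" and dL: "deriv L = (\<lambda>x. deriv F x * inverse (F x))"
    using smooth_ln[OF F pos] unfolding L_def by auto
  have dF: "deriv F = (\<lambda>x. F x * deriv L x)"
  proof
    fix x have "F x \<noteq> 0" using pos[of x] by simp
    then show "deriv F x = F x * deriv L x" unfolding dL by (simp add: field_simps)
  qed
  have "(deriv ^^ Suc n) F = (deriv ^^ n) (deriv F)" by (simp only: funpow_Suc_right o_def)
  also have "\<dots> = (deriv ^^ n) (\<lambda>x. F x * deriv L x)" by (simp only: dF)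
  finally have e1: "(deriv ^^ Suc n) F x = (deriv ^^ n) (\<lambda>x. F x * deriv L x) x" by (rule fun_cong)
  have sdL: "smooth (deriv L)" using sL smooth_deriv_iff by blast
  have "(deriv ^^ Suc n) F x = (\<Sum>i = 0..n. real (n choose i) * (deriv ^^ i) F x * (deriv ^^ (n-i)) (deriv L) x)"
    unfolding e1 by (rule higher_deriv_mult_smooth[OF F sdL])
  also have "\<dots> = (\<Sum>i = 0..n. real (n choose i) * (deriv ^^ i) F x * (deriv ^^ Suc (n-i)) L x)"
    by (simp only: funpow_Suc_right o_def)
  finally show ?thesis unfolding L_def .
qed


lemma cumulant_rec0:
  assumes F: "smooth F" and pos: "\<And>x. F x > 0"
  shows "(deriv ^^ Suc n) F 0 = F 0 * (deriv ^^ Suc n) (\<lambda>x. ln (F x)) 0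
     + (\<Sum>i = 1..n. real (n choose i) * (deriv ^^ i) F 0 * (deriv ^^ Suc (n-i)) (\<lambda>x. ln (F x)) 0)"
proof -
  have "(deriv ^^ Suc n) F 0 = (\<Sum>i = 0..n. real (n choose i) * (deriv ^^ i) F 0 * (deriv ^^ Suc (n-i)) (\<lambda>x. ln (F x)) 0)"
    by (rule cumulant_rec[OF F pos])
  also have "\<dots> = real (n choose 0) * (deriv ^^ 0) F 0 * (deriv ^^ Suc (n-0)) (\<lambda>x. ln (F x)) 0
     + (\<Sum>i = Suc 0..n. real (n choose i) * (deriv ^^ i) F 0 * (deriv ^^ Suc (n-i)) (\<lambda>x. ln (F x)) 0)"
    by (rule sum.atLeast_Suc_atMost) simp
  finally show ?thesis by simp
qed

lemma cumulant_uniq: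
  assumes F1: "smooth F1" and pos1: "\<And>x. F1 x > 0"
    and F2: "smooth F2" and pos2: "\<And>x. F2 x > 0"
    and eq: "\<forall>k\<le>n. (deriv ^^ k) F1 0 = (deriv ^^ k) F2 0"
  shows "k \<le> n \<Longrightarrow> (deriv ^^ k) (\<lambda>x. ln (F1 x)) 0 = (deriv ^^ k) (\<lambda>x. ln (F2 x)) 0"
proof (induction k rule: less_induct)
  case (less k)
  show ?case
  proof (cases k)
    case 0
    have "(deriv ^^ 0) F1 0 = (deriv ^^ 0) F2 0" using eq by blast
    then show ?thesis using 0 by simp
  next
    case (Suc j)
    note r1 = cumulant_rec0[OF F1 pos1, of j] and r2 = cumulant_rec0[OF F2 pos2, of j]
    have s: "(\<Sum>i = 1..j. real (j choose i) * (deriv ^^ i) F1 0 * (deriv ^^ Suc (j-i)) (\<lambda>x. ln (F1 x)) 0)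
       = (\<Sum>i = 1..j. real (j choose i) * (deriv ^^ i) F2 0 * (deriv ^^ Suc (j-i)) (\<lambda>x. ln (F2 x)) 0)"
    proof (rule sum.cong)
      fix i assume i: "i \<in> {1..j}"
      have "(deriv ^^ i) F1 0 = (deriv ^^ i) F2 0" using eq i Suc less.prems by auto
      moreover have "(deriv ^^ Suc (j-i)) (\<lambda>x. ln (F1 x)) 0 = (deriv ^^ Suc (j-i)) (\<lambda>x. ln (F2 x)) 0"
        using less.IH[of "Suc (j-i)"] i Suc less.prems by auto
      ultimately show "real (j choose i) * (deriv ^^ i) F1 0 * (deriv ^^ Suc (j-i)) (\<lambda>x. ln (F1 x)) 0
         = real (j choose i) * (deriv ^^ i) F2 0 * (deriv ^^ Suc (j-i)) (\<lambda>x. ln (F2 x)) 0" by simp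
    qed simp
    have "(deriv ^^ Suc j) F1 0 = (deriv ^^ Suc j) F2 0" using eq Suc less.prems by auto
    moreover have "(deriv ^^ 0) F1 0 = (deriv ^^ 0) F2 0" using eq by blast
    then have "F1 0 = F2 0" by simp
    ultimately have "F1 0 * (deriv ^^ Suc j) (\<lambda>x. ln (F1 x)) 0 = F1 0 * (deriv ^^ Suc j) (\<lambda>x. ln (F2 x)) 0"
      using r1 r2 s by simp
    then show ?thesis using pos1[of 0] Suc by simp
  qed
qed

lemma cumulant_int:
  assumes F: "smooth F" and pos: "\<And>x. F x > 0" and F0: "F 0 = 1"
    and ints: "\<forall>i\<le>n. 2 ^ i * (deriv ^^ i) F 0 \<in> \<int>"
  shows "k \<le> n \<Longrightarrow> 2 ^ k * (deriv ^^ k) (\<lambda>x. ln (F x)) 0 \<in> \<int>"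
proof (induction k rule: less_induct)
  case (less k)
  show ?case
  proof (cases k)
    case 0 then show ?thesis using F0 by simp
  next
    case (Suc j)
    let ?L = "\<lambda>x. ln (F x)"
    note r = cumulant_rec0[OF F pos, of j]
    have "2 ^ Suc j * (deriv ^^ Suc j) ?L 0 = 2 ^ Suc j * (deriv ^^ Suc j) F 0
      - (\<Sum>i = 1..j. real (j choose i) * (2 ^ i * (deriv ^^ i) F 0) * (2 ^ Suc (j-i) * (deriv ^^ Suc (j-i)) ?L 0))"
    proof -
      have "(\<Sum>i = 1..j. real (j choose i) * (2 ^ i * (deriv ^^ i) F 0) * (2 ^ Suc (j-i) * (deriv ^^ Suc (j-i)) ?L 0))
        = 2 ^ Suc j * (\<Sum>i = 1..j. real (j choose i) * (deriv ^^ i) F 0 * (deriv ^^ Suc (j-i)) ?L 0)"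
        unfolding sum_distrib_left
      proof (rule sum.cong)
        fix i assume i: "i \<in> {1..j}"
        have "(2::real) ^ i * 2 ^ Suc (j-i) = 2 ^ Suc j" using i by (simp flip: power_add)
        then show "real (j choose i) * (2 ^ i * (deriv ^^ i) F 0) * (2 ^ Suc (j-i) * (deriv ^^ Suc (j-i)) ?L 0)
          = 2 ^ Suc j * (real (j choose i) * (deriv ^^ i) F 0 * (deriv ^^ Suc (j-i)) ?L 0)"
          by (metis (no_types, lifting) mult.assoc mult.left_commute)
      qed simp
      then show ?thesis using r F0 by (simp add: algebra_simps)
    qed
    also have "\<dots> \<in> \<int>"
    proof (rule Ints_diff)
      show "2 ^ Suc j * (deriv ^^ Suc j) F 0 \<in> \<int>" using ints less.prems Suc by blast
    next
      show "(\<Sum>i = 1..j. real (j choose i) * (2 ^ i * (deriv ^^ i) F 0) * (2 ^ Suc (j-i) * (deriv ^^ Suc (j-i)) ?L 0)) \<in> \<int>"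
      proof (rule Ints_sum)
        fix i assume i: "i \<in> {1..j}"
        have a1: "real (j choose i) \<in> \<int>" by simp
        have a2: "2 ^ i * (deriv ^^ i) F 0 \<in> \<int>" using ints i less.prems Suc by auto
        have a3: "2 ^ Suc (j-i) * (deriv ^^ Suc (j-i)) ?L 0 \<in> \<int>" using less.IH[of "Suc (j-i)"] i less.prems Suc by auto
        show "real (j choose i) * (2 ^ i * (deriv ^^ i) F 0) * (2 ^ Suc (j-i) * (deriv ^^ Suc (j-i)) ?L 0) \<in> \<int>"
          by (rule Ints_mult[OF Ints_mult[OF a1 a2] a3])
      qed
    qed
    finally show ?thesis using Suc by simp
  qed
qed

definition Mh :: "(real \<Rightarrow> real) \<Rightarrow> real \<Rightarrow> real" where
  "Mh X t = integral {0..1} (\<lambda>\<omega>. exp (t * X \<omega>))"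

lemma cont_snd_comp: "continuous_on UNIV X \<Longrightarrow> continuous_on A (\<lambda>x. X (snd x))"
  by (rule continuous_on_compose2[OF _ continuous_on_snd]) auto

lemma mh_has_deriv:
  fixes k :: nat and t :: real and X :: "real \<Rightarrow> real"
  assumes X: "continuous_on UNIV X"
  shows "((\<lambda>t. integral {0..1} (\<lambda>\<omega>. X \<omega> ^ k * exp (t * X \<omega>))) has_real_derivative
      integral {0..1} (\<lambda>\<omega>. X \<omega> ^ Suc k * exp (t * X \<omega>))) (at t)"
proof -
  have "((\<lambda>t. integral (cbox 0 1) (\<lambda>\<omega>. X \<omega> ^ k * exp (t * X \<omega>))) has_field_derivative
    integral (cbox 0 1) (\<lambda>\<omega>. X \<omega> ^ Suc k * exp (t * X \<omega>))) (at t within UNIV)"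
  proof (rule leibniz_rule_field_derivative)
    fix x :: real and \<omega> :: real
    show "((\<lambda>x. X \<omega> ^ k * exp (x * X \<omega>)) has_field_derivative X \<omega> ^ Suc k * exp (x * X \<omega>)) (at x within UNIV)"
      by (auto intro!: derivative_eq_intros simp: algebra_simps)
  next
    fix x :: real
    show "(\<lambda>\<omega>. X \<omega> ^ k * exp (x * X \<omega>)) integrable_on cbox 0 1"
      by (intro integrable_continuous continuous_intros continuous_on_subset[OF X]) auto
  next
    show "continuous_on (UNIV \<times> cbox 0 1) (\<lambda>(x, \<omega>). X \<omega> ^ Suc k * exp (x * X \<omega>))"
      unfolding case_prod_beta
      by (intro continuous_intros cont_snd_comp[OF X])
  qed auto
  then show ?thesis by simp
qed

lemma mh_deriv:
  assumes X: "continuous_on UNIV X"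
  shows "(deriv ^^ k) (Mh X) = (\<lambda>t. integral {0..1} (\<lambda>\<omega>. X \<omega> ^ k * exp (t * X \<omega>)))"
proof (induction k)
  case 0 then show ?case by (simp add: Mh_def[abs_def])
next
  case (Suc k)
  show ?case
  proof
    fix t
    show "(deriv ^^ Suc k) (Mh X) t = integral {0..1} (\<lambda>\<omega>. X \<omega> ^ Suc k * exp (t * X \<omega>))"
      using DERIV_imp_deriv[OF mh_has_deriv[OF X, of k t]] Suc by simp
  qed
qed

lemma mh_smooth:
  assumes X: "continuous_on UNIV X"
  shows "smooth (Mh X)"
  unfolding smooth_def su_def
proof (intro allI impI)
  fix n k :: nat and t :: real
  show "(deriv ^^ k) (Mh X) differentiable at t"
    unfolding mh_deriv[OF X] using mh_has_deriv[OF X, of k t] by (auto simp: real_differentiable_def)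
qed

lemma mh_deriv0:
  assumes X: "continuous_on UNIV X"
  shows "(deriv ^^ k) (Mh X) 0 = integral {0..1} (\<lambda>\<omega>. X \<omega> ^ k)"
  unfolding mh_deriv[OF X] by simp

lemma mh_0: "Mh X 0 = 1"
  unfolding Mh_def by simp

lemma mh_pos:
  assumes X: "continuous_on UNIV X" and C: "\<And>\<omega>. \<bar>X \<omega>\<bar> \<le> C"
  shows "Mh X t > 0"
proof -
  have "exp (- \<bar>t\<bar> * C) \<le> exp (t * X \<omega>)" for \<omega>
  proof -
    have "\<bar>t * X \<omega>\<bar> \<le> \<bar>t\<bar> * C" using C[of \<omega>] by (simp add: abs_mult mult_left_mono)
    then show ?thesis by simp
  qed
  have "integral {0..1::real} (\<lambda>\<omega>. exp (- \<bar>t\<bar> * C)) \<le> integral {0..1} (\<lambda>\<omega>. exp (t * X \<omega>))"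
  proof -
    have i1: "(\<lambda>\<omega>. exp (t * X \<omega>)) integrable_on {0..1}"
      by (intro integrable_continuous_interval continuous_intros continuous_on_subset[OF X]) auto
    have i2: "(\<lambda>\<omega>. exp (- \<bar>t\<bar> * C)) integrable_on {0..1::real}" by (rule integrable_continuous_interval) (rule continuous_on_const)
    show ?thesis using integral_le[OF i2 i1] \<open>\<And>\<omega>. exp (- \<bar>t\<bar> * C) \<le> exp (t * X \<omega>)\<close> by blast
  qed
  moreover have "integral {0..1::real} (\<lambda>\<omega>. exp (- \<bar>t\<bar> * C)) = exp (- \<bar>t\<bar> * C)" by simp
  ultimately show ?thesis unfolding Mh_def by (metis exp_gt_zero order_less_le_trans)
qed

lemma cumulant_eq:
  assumes X: "continuous_on UNIV X"
  shows "cumulant (lebesgue_on {0..1}) m X = (deriv ^^ m) (\<lambda>t. ln (Mh X t)) 0"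
proof -
  have "(\<lambda>t. ln (integral\<^sup>L (lebesgue_on {0..1}) (\<lambda>\<omega>. exp (t * X \<omega>)))) = (\<lambda>t. ln (Mh X t))"
  proof
    fix t
    have "integral\<^sup>L (lebesgue_on {0..1}) (\<lambda>\<omega>. exp (t * X \<omega>)) = integral {0..1} (\<lambda>\<omega>. exp (t * X \<omega>))"
      by (intro lebesgue_integral_eq_integral continuous_imp_integrable_real continuous_intros
          continuous_on_subset[OF X]) auto
    then show "ln (integral\<^sup>L (lebesgue_on {0..1}) (\<lambda>\<omega>. exp (t * X \<omega>))) = ln (Mh X t)"
      unfolding Mh_def by simp
  qed
  then show ?thesis unfolding cumulant_def by simp
qed

definition Lst :: "nat \<Rightarrow> 'a set \<Rightarrow> 'a list set" where
  "Lst n A = {xs. set xs \<subseteq> A \<and> length xs = n}"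

lemma finite_Lst: "finite A \<Longrightarrow> finite (Lst n A)"
  unfolding Lst_def by (rule finite_lists_length_eq)

lemma Lst_0 [simp]: "Lst 0 A = {[]}" unfolding Lst_def by auto

lemma Lst_Suc: "Lst (Suc n) A = (\<lambda>(xs, x). x # xs) ` (Lst n A \<times> A)"
  unfolding Lst_def by (rule lists_length_Suc_eq)

lemma sum_Lst_Suc:
  assumes "finite A"
  shows "(\<Sum>xs\<in>Lst (Suc n) A. g xs) = (\<Sum>xs\<in>Lst n A. \<Sum>x\<in>A. g (x # xs))"
proof -
  have inj: "inj_on (\<lambda>(xs, x). x # xs) (Lst n A \<times> A)" by (auto simp: inj_on_def)
  have "(\<Sum>xs\<in>Lst (Suc n) A. g xs) = (\<Sum>p\<in>Lst n A \<times> A. g ((\<lambda>(xs, x). x # xs) p))"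
    unfolding Lst_Suc by (rule sum.reindex[OF inj, unfolded o_def])
  also have "\<dots> = (\<Sum>xs\<in>Lst n A. \<Sum>x\<in>A. g (x # xs))"
    by (simp add: sum.cartesian_product case_prod_beta)
  finally show ?thesis .
qed

lemma power_sum_Lst:
  fixes f :: "'a \<Rightarrow> 'b::comm_ring_1"
  assumes "finite A"
  shows "(\<Sum>k\<in>A. f k) ^ n = (\<Sum>xs\<in>Lst n A. \<Prod>x\<leftarrow>xs. f x)"
proof (induction n)
  case 0 then show ?case by simp
next
  case (Suc n)
  have "(\<Sum>k\<in>A. f k) ^ Suc n = (\<Sum>k\<in>A. f k) * (\<Sum>xs\<in>Lst n A. \<Prod>x\<leftarrow>xs. f x)"
    using Suc by simp
  also have "\<dots> = (\<Sum>xs\<in>Lst n A. \<Sum>x\<in>A. f x * (\<Prod>y\<leftarrow>xs. f y))"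
    by (simp add: sum_distrib_left sum_distrib_right sum.swap[of _ A])
  also have "\<dots> = (\<Sum>xs\<in>Lst (Suc n) A. \<Prod>x\<leftarrow>xs. f x)"
    by (simp add: sum_Lst_Suc[OF assms])
  finally show ?case .
qed

lemma Lst_append_bij:
  "bij_betw (\<lambda>(xs, ys). xs @ ys) (Lst n A \<times> Lst k A) (Lst (n + k) A)"
proof (rule bij_betwI[where g = "\<lambda>zs. (take n zs, drop n zs)"])
  show "(\<lambda>(xs, ys). xs @ ys) \<in> Lst n A \<times> Lst k A \<rightarrow> Lst (n + k) A" unfolding Lst_def by auto
  show "(\<lambda>zs. (take n zs, drop n zs)) \<in> Lst (n + k) A \<rightarrow> Lst n A \<times> Lst k A"
    unfolding Lst_def by (auto dest: in_set_takeD in_set_dropD)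
qed (auto simp: Lst_def)

lemma sum_Lst_mult:
  fixes f g :: "'a list \<Rightarrow> 'b::comm_ring_1"
  assumes "finite A"
  shows "(\<Sum>xs\<in>Lst n A. f xs) * (\<Sum>ys\<in>Lst k A. g ys) = (\<Sum>zs\<in>Lst (n + k) A. f (take n zs) * g (drop n zs))"
proof -
  have "(\<Sum>zs\<in>Lst (n + k) A. f (take n zs) * g (drop n zs))
      = (\<Sum>p\<in>Lst n A \<times> Lst k A. f (take n (fst p @ snd p)) * g (drop n (fst p @ snd p)))"
    using sum.reindex_bij_betw[OF Lst_append_bij[of n A k], of "\<lambda>zs. f (take n zs) * g (drop n zs)"]
    by (simp add: case_prod_beta)
  also have "\<dots> = (\<Sum>p\<in>Lst n A \<times> Lst k A. f (fst p) * g (snd p))"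
    by (intro sum.cong) (auto simp: Lst_def)
  also have "\<dots> = (\<Sum>xs\<in>Lst n A. f xs) * (\<Sum>ys\<in>Lst k A. g ys)"
    by (simp add: sum_product sum.cartesian_product case_prod_beta)
  finally show ?thesis by simp
qed

definition Sg :: "nat \<Rightarrow> int list set" where "Sg n = Lst n {-1, 1}"

lemma finite_Sg: "finite (Sg n)" unfolding Sg_def by (intro finite_Lst) auto

definition lin :: "(nat \<Rightarrow> int) \<Rightarrow> int list \<Rightarrow> nat list \<Rightarrow> int" where
  "lin A es xs = (\<Sum>p\<leftarrow>zip es xs. fst p * A (snd p))"

lemma lin_Cons [simp]: "lin A (e # es) (x # xs) = e * A x + lin A es xs"
  by (simp add: lin_def)

lemma cos_prod:
  fixes \<theta> :: "nat \<Rightarrow> real"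
  shows "(\<Prod>k\<leftarrow>xs. cos (\<theta> k)) = (\<Sum>es\<in>Sg (length xs). cos (\<Sum>p\<leftarrow>zip es xs. of_int (fst p) * \<theta> (snd p))) / 2 ^ length xs"
proof (induction xs)
  case Nil then show ?case by (simp add: Sg_def)
next
  case (Cons x xs)
  let ?T = "\<lambda>es. (\<Sum>p\<leftarrow>zip es xs. of_int (fst p) * \<theta> (snd p))"
  have "(\<Prod>k\<leftarrow>x # xs. cos (\<theta> k)) = (\<Sum>es\<in>Sg (length xs). cos (\<theta> x) * cos (?T es)) / 2 ^ length xs"
    using Cons by (simp add: sum_distrib_left)
  also have "\<dots> = (\<Sum>es\<in>Sg (length xs). (cos (- \<theta> x + ?T es) + cos (\<theta> x + ?T es)) / 2) / 2 ^ length xs"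
  proof -
    have "cos (\<theta> x) * cos (?T es) = (cos (- \<theta> x + ?T es) + cos (\<theta> x + ?T es)) / 2" for es
    proof -
      have "- \<theta> x + ?T es = - (\<theta> x - ?T es)" by simp
      then have "cos (- \<theta> x + ?T es) = cos (\<theta> x - ?T es)" by (simp only: cos_minus)
      then show ?thesis by (simp add: cos_times_cos)
    qed
    then show ?thesis by (intro arg_cong2[where f="(/)"] sum.cong) auto
  qed
  also have "\<dots> = (\<Sum>es\<in>Sg (length xs). (cos (- \<theta> x + ?T es) + cos (\<theta> x + ?T es))) / 2 ^ Suc (length xs)"
    by (simp add: sum_divide_distrib[symmetric])
  also have "(\<Sum>es\<in>Sg (length xs). (cos (- \<theta> x + ?T es) + cos (\<theta> x + ?T es)))
      = (\<Sum>es\<in>Sg (Suc (length xs)). cos (\<Sum>p\<leftarrow>zip es (x # xs). of_int (fst p) * \<theta> (snd p)))"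
    unfolding Sg_def by (subst sum_Lst_Suc) (auto simp: algebra_simps)
  finally show ?case by simp
qed

lemma integral_cos_int:
  fixes N :: int
  shows "integral {0..1} (\<lambda>\<omega>. cos (2 * pi * of_int N * \<omega>)) = (if N = 0 then 1 else 0)"
proof (cases "N = 0")
  case True then show ?thesis by simp
next
  case False
  have "((\<lambda>\<omega>. cos (2 * pi * of_int N * \<omega>)) has_integral
      (sin (2 * pi * of_int N * 1) / (2 * pi * of_int N) - sin (2 * pi * of_int N * 0) / (2 * pi * of_int N))) {0..1}"
  proof (rule fundamental_theorem_of_calculus)
    fix x :: real
    show "((\<lambda>\<omega>. sin (2 * pi * of_int N * \<omega>) / (2 * pi * of_int N)) has_vector_derivative cos (2 * pi * of_int N * x)) (at x within {0..1})"
      using False by (auto intro!: derivative_eq_intros simp: has_real_derivative_iff_has_vector_derivative[symmetric])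
  qed simp
  then show ?thesis using False by (simp add: integral_unique sin_int_2pin)
qed

definition Xk :: "(nat \<Rightarrow> complex) \<Rightarrow> nat \<Rightarrow> real \<Rightarrow> real" where
  "Xk a k \<omega> = cos (2 * pi * Re (a k) * \<omega>)"

definition phi :: "(nat \<Rightarrow> complex) \<Rightarrow> nat list \<Rightarrow> real" where
  "phi a xs = integral {0..1} (\<lambda>\<omega>. \<Prod>k\<leftarrow>xs. Xk a k \<omega>)"

definition phic :: "(nat \<Rightarrow> complex) \<Rightarrow> nat list \<Rightarrow> real" where
  "phic a xs = real (card {es\<in>Sg (length xs). Vs a (zip es xs) = 0}) / 2 ^ length xs"

lemma lin_Nil1 [simp]: "lin A [] xs = 0" by (simp add: lin_def)

lemma Vs_zip_lin: "(\<forall>k\<in>set xs. a k = of_int (A k)) \<Longrightarrow> Vs a (zip es xs) = of_int (lin A es xs)"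
proof (induction xs arbitrary: es)
  case Nil then show ?case by (simp add: lin_def)
next
  case (Cons x xs) then show ?case by (cases es) (auto simp: lin_def)
qed

lemma theta_lin:
  assumes "\<forall>k\<in>set xs. a k = of_int (A k)"
  shows "(\<Sum>p\<leftarrow>zip es xs. of_int (fst p) * (2 * pi * Re (a (snd p)) * \<omega>)) = 2 * pi * of_int (lin A es xs) * \<omega>"
  using assms
proof (induction xs arbitrary: es)
  case Nil then show ?case by (simp add: lin_def)
next
  case (Cons x xs) then show ?case by (cases es) (auto simp: algebra_simps)
qed

lemma phi_eq:
  assumes int: "\<forall>k\<in>set xs. a k = of_int (A k)"
  shows "phi a xs = phic a xs"
proof -
  let ?n = "length xs"
  have "(\<lambda>\<omega>. \<Prod>k\<leftarrow>xs. Xk a k \<omega>) = (\<lambda>\<omega>. (\<Sum>es\<in>Sg ?n. cos (2 * pi * of_int (lin A es xs) * \<omega>)) / 2 ^ ?n)"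
  proof
    fix \<omega>
    show "(\<Prod>k\<leftarrow>xs. Xk a k \<omega>) = (\<Sum>es\<in>Sg ?n. cos (2 * pi * of_int (lin A es xs) * \<omega>)) / 2 ^ ?n"
      unfolding Xk_def cos_prod[of "\<lambda>k. 2 * pi * Re (a k) * \<omega>"] theta_lin[OF int] ..
  qed
  then have "phi a xs = integral {0..1} (\<lambda>\<omega>. (\<Sum>es\<in>Sg ?n. cos (2 * pi * of_int (lin A es xs) * \<omega>)) / 2 ^ ?n)"
    unfolding phi_def by simp
  also have "\<dots> = integral {0..1} (\<lambda>\<omega>. (\<Sum>es\<in>Sg ?n. cos (2 * pi * of_int (lin A es xs) * \<omega>))) / 2 ^ ?n"
    by (rule integral_divide)
  also have "integral {0..1} (\<lambda>\<omega>. (\<Sum>es\<in>Sg ?n. cos (2 * pi * of_int (lin A es xs) * \<omega>)))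
     = (\<Sum>es\<in>Sg ?n. integral {0..1} (\<lambda>\<omega>. cos (2 * pi * of_int (lin A es xs) * \<omega>)))"
    by (rule integral_sum) (auto intro!: integrable_continuous_interval continuous_intros simp: finite_Sg)
  also have "\<dots> = (\<Sum>es\<in>Sg ?n. if lin A es xs = 0 then 1 else 0)"
    by (simp add: integral_cos_int)
  also have "\<dots> = real (card {es\<in>Sg ?n. lin A es xs = 0})"
    by (simp add: sum.If_cases finite_Sg Int_def conj_commute)
  also have "{es\<in>Sg ?n. lin A es xs = 0} = {es\<in>Sg ?n. Vs a (zip es xs) = 0}"
    using Vs_zip_lin[OF int] by auto
  finally show ?thesis unfolding phic_def .
qed

locale ablin =
  fixes f :: "nat set \<Rightarrow> real" and \<psi> :: "nat list \<Rightarrow> real" and m G H :: nat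
  assumes m: "m \<ge> 1"
    and deg: "\<And>A. finite A \<Longrightarrow> A \<subseteq> {1..} \<Longrightarrow> f A = (\<Sum>xs\<in>Lst m A. \<psi> xs)"
    and add: "\<And>A r. finite A \<Longrightarrow> A \<subseteq> {1..} \<Longrightarrow> (\<forall>x\<in>A. x \<le> r \<or> r + G \<le> x) \<Longrightarrow>
                f A = f {x\<in>A. x \<le> r} + f {x\<in>A. r + G \<le> x}"
    and shift: "\<And>A s. finite A \<Longrightarrow> A \<subseteq> {H..} \<Longrightarrow> f ((\<lambda>x. x + s) ` A) = f A"
    and G1: "G \<ge> 1" and H1: "H \<ge> 1"
begin

definition c :: "nat set \<Rightarrow> real" where
  "c B = (\<Sum>xs\<in>{xs\<in>Lst m B. set xs = B}. \<psi> xs)"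

lemma f_c: assumes "finite A" "A \<subseteq> {1..}" shows "f A = (\<Sum>B\<in>Pow A. c B)"
proof -
  have "f A = (\<Sum>xs\<in>Lst m A. \<psi> xs)" using deg assms by blast
  also have "\<dots> = (\<Sum>B\<in>Pow A. \<Sum>xs\<in>{xs\<in>Lst m A. set xs = B}. \<psi> xs)"
    by (rule sum.group[symmetric]) (use finite_Lst[OF assms(1), of m] assms(1) in \<open>auto simp: Lst_def\<close>)
  also have "\<dots> = (\<Sum>B\<in>Pow A. c B)"
    unfolding c_def by (intro sum.cong refl arg_cong2[where f=sum]) (auto simp: Lst_def)
  finally show ?thesis .
qed

lemma c_nz: assumes "c B \<noteq> 0" shows "B \<noteq> {}" "card B \<le> m"
proof -
  have "{xs\<in>Lst m B. set xs = B} \<noteq> {}" using assms unfolding c_def by (metis sum.empty)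
  then obtain xs where xs: "xs \<in> Lst m B" "set xs = B" by blast
  show "card B \<le> m" using xs card_length[of xs] unfolding Lst_def by auto
  show "B \<noteq> {}" using xs m unfolding Lst_def by auto
qed

lemma c_empty: "c {} = 0" using c_nz(1) by blast

lemma c_split:
  "finite B \<Longrightarrow> B \<subseteq> {1..} \<Longrightarrow> (\<forall>x\<in>B. x \<le> r \<or> r + G \<le> x) \<Longrightarrow> (\<exists>x\<in>B. x \<le> r) \<Longrightarrow> (\<exists>x\<in>B. r + G \<le> x) \<Longrightarrow> c B = 0"
proof (induction "card B" arbitrary: B rule: less_induct)
  case less
  define B1 where "B1 = {x\<in>B. x \<le> r}"
  define B2 where "B2 = {x\<in>B. r + G \<le> x}"
  have fin: "finite B" using less.prems by blast
  have pt: "c D = (if D \<subseteq> B1 then c D else 0) + (if D \<subseteq> B2 then c D else 0) + (if D = B then c D else 0)"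
    if D: "D \<in> Pow B" for D
  proof (cases "D = {}")
    case True then show ?thesis using c_empty by simp
  next
    case ne: False
    show ?thesis
    proof (cases "D \<subseteq> B1")
      case True
      then have "\<not> D \<subseteq> B2" using ne G1 unfolding B1_def B2_def by force
      moreover have "D \<noteq> B" using True less.prems(5) G1 unfolding B1_def by force
      ultimately show ?thesis using True by simp
    next
      case n1: False
      show ?thesis
      proof (cases "D \<subseteq> B2")
        case True
        moreover have "D \<noteq> B" using True less.prems(4) G1 unfolding B2_def by force
        ultimately show ?thesis using n1 by simp
      next
        case n2: False
        show ?thesis
        proof (cases "D = B")
          case True then show ?thesis using n1 n2 by simp
        next
          case False
          have "card D < card B" using D False fin by (simp add: psubset_card_mono psubsetI)
          moreover have "\<exists>x\<in>D. x \<le> r" using n2 unfolding B2_def using D less.prems(3) by auto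
          moreover have "\<exists>x\<in>D. r + G \<le> x" using n1 unfolding B1_def using D less.prems(3) by auto
          ultimately have "c D = 0" using less.hyps[of D] D less.prems fin by (auto intro: finite_subset)
          then show ?thesis using False by simp
        qed
      qed
    qed
  qed
  have "f B = (\<Sum>D\<in>Pow B. c D)" using f_c fin less.prems(2) by blast
  also have "\<dots> = (\<Sum>D\<in>Pow B. if D \<subseteq> B1 then c D else 0) + (\<Sum>D\<in>Pow B. if D \<subseteq> B2 then c D else 0)
      + (\<Sum>D\<in>Pow B. if D = B then c D else 0)"
    by (subst sum.cong[OF refl pt]) (simp_all add: sum.distrib)
  also have "(\<Sum>D\<in>Pow B. if D \<subseteq> B1 then c D else 0) = (\<Sum>D\<in>Pow B1. c D)"
    using fin by (subst sum.inter_filter[symmetric]) (auto simp: B1_def intro!: sum.cong)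
  also have "(\<Sum>D\<in>Pow B. if D \<subseteq> B2 then c D else 0) = (\<Sum>D\<in>Pow B2. c D)"
    using fin by (subst sum.inter_filter[symmetric]) (auto simp: B2_def intro!: sum.cong)
  also have "(\<Sum>D\<in>Pow B. if D = B then c D else 0) = c B"
    using fin by (simp add: sum.delta)
  also have "(\<Sum>D\<in>Pow B1. c D) = f B1" using f_c[of B1] fin less.prems(2) unfolding B1_def by force
  also have "(\<Sum>D\<in>Pow B2. c D) = f B2" using f_c[of B2] fin less.prems(2) unfolding B2_def by force
  finally have "f B = f B1 + f B2 + c B" .
  moreover have "f B = f B1 + f B2" unfolding B1_def B2_def using add fin less.prems(2,3) by blast
  ultimately show "c B = 0" by simp
qed

lemma c_span:
  assumes nz: "c B \<noteq> 0" and fin: "finite B" and B1: "B \<subseteq> {1..}"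
  shows "Max B < Min B + m * G"
proof (rule ccontr)
  assume "\<not> ?thesis"
  then have big: "Min B + m * G \<le> Max B" by simp
  have ne: "B \<noteq> {}" using c_nz(1)[OF nz] .
  define mn where "mn = Min B"
  have mnB: "mn \<in> B" unfolding mn_def using fin ne by simp
  have mnle: "\<forall>x\<in>B. mn \<le> x" unfolding mn_def using fin by simp
  have MxB: "Max B \<in> B" using fin ne by simp
  show False
  proof (cases "\<forall>j<m. \<exists>x\<in>B. mn + j * G \<le> x \<and> x < mn + Suc j * G")
    case True
    then obtain h where h: "\<And>j. j < m \<Longrightarrow> h j \<in> B \<and> mn + j * G \<le> h j \<and> h j < mn + Suc j * G" by metis
    have lt: "h i < h j" if "i < j" "j < m" for i j
    proof -
      have "h i < mn + Suc i * G" using h[of i] that by auto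
      also have "\<dots> \<le> mn + j * G" using that by (intro add_left_mono mult_right_mono) auto
      also have "\<dots> \<le> h j" using h[of j] that by auto
      finally show ?thesis .
    qed
    have inj: "inj_on h {..<m}"
    proof (rule inj_onI)
      fix i j assume "i \<in> {..<m}" "j \<in> {..<m}" "h i = h j"
      then show "i = j" using lt[of i j] lt[of j i] by (cases i j rule: linorder_cases) auto
    qed
    have sub: "h ` {..<m} \<subseteq> B - {Max B}"
    proof
      fix y assume "y \<in> h ` {..<m}"
      then obtain j where j: "j < m" "y = h j" by auto
      have "h j < mn + Suc j * G" using h[of j] j by auto
      also have "\<dots> \<le> mn + m * G" using j by (intro add_left_mono mult_right_mono) auto
      finally show "y \<in> B - {Max B}" using h[of j] j big unfolding mn_def by auto
    qed
    have "m = card (h ` {..<m})" using card_image[OF inj] by simp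
    also have "\<dots> \<le> card (B - {Max B})" using fin by (intro card_mono sub) auto
    also have "\<dots> = card B - 1" using MxB fin by simp
    finally show False using c_nz(2)[OF nz] m ne fin by (simp add: card_gt_0_iff)
  next
    case False
    then obtain j where j: "j < m" and empty: "\<forall>x\<in>B. \<not> (mn + j * G \<le> x \<and> x < mn + Suc j * G)" by auto
    have j0: "j \<noteq> 0" using empty mnB G1 by auto
    define r where "r = mn + j * G - 1"
    have jG: "j * G \<ge> 1" using j0 G1 by simp
    have cB: "c B = 0"
    proof (rule c_split[OF fin B1, of r])
      show "\<forall>x\<in>B. x \<le> r \<or> r + G \<le> x"
      proof
        fix x assume x: "x \<in> B"
        show "x \<le> r \<or> r + G \<le> x"
        proof (cases "x < mn + j * G")
          case True then have "x \<le> r" unfolding r_def using jG by linarith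
          then show ?thesis by simp
        next
          case False
          then have "mn + Suc j * G \<le> x" using empty x by auto
          then have "r + G \<le> x" unfolding r_def using jG by simp
          then show ?thesis by simp
        qed
      qed
      have "mn \<le> r" unfolding r_def using jG by linarith
      then show "\<exists>x\<in>B. x \<le> r" using mnB by blast
      have "mn + Suc j * G \<le> mn + m * G" using j by (intro add_left_mono mult_right_mono) auto
      then show "\<exists>x\<in>B. r + G \<le> x" using MxB big jG unfolding r_def mn_def by (intro bexI[of _ "Max B"]) auto
    qed
    then show False using nz by simp
  qed
qed

lemma Pow_image_shift: "Pow ((\<lambda>x. x + s) ` B) = (\<lambda>D. (\<lambda>x. x + s) ` D) ` Pow B"
proof
  show "Pow ((\<lambda>x. x + s) ` B) \<subseteq> (\<lambda>D. (\<lambda>x. x + s) ` D) ` Pow B"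
  proof
    fix D' assume "D' \<in> Pow ((\<lambda>x. x + s) ` B)"
    then obtain AA where "AA \<subseteq> B" "D' = (\<lambda>x. x + s) ` AA" by (auto simp: subset_image_iff)
    then show "D' \<in> (\<lambda>D. (\<lambda>x. x + s) ` D) ` Pow B" by blast
  qed
qed auto

lemma inj_image_shift: "inj_on (\<lambda>D. (\<lambda>x::nat. x + s) ` D) X"
  by (rule inj_onI) (simp add: inj_image_eq_iff inj_def)

lemma c_shift:
  "finite B \<Longrightarrow> B \<subseteq> {H..} \<Longrightarrow> c ((\<lambda>x. x + s) ` B) = c B"
proof (induction "card B" arbitrary: B rule: less_induct)
  case less
  let ?sh = "\<lambda>D. (\<lambda>x. x + s) ` D"
  have fin: "finite B" and BH: "B \<subseteq> {H..}" using less.prems by auto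
  have B1: "B \<subseteq> {1..}" using BH H1 by auto
  have fin': "finite (?sh B)" using fin by simp
  have B1': "?sh B \<subseteq> {1..}" using B1 by auto
  have e1: "f B = c B + (\<Sum>D\<in>Pow B - {B}. c D)"
    using f_c[OF fin B1] fin by (simp add: sum.remove[of "Pow B" B])
  have e2: "f (?sh B) = c (?sh B) + (\<Sum>D\<in>Pow (?sh B) - {?sh B}. c D)"
    using f_c[OF fin' B1'] fin' by (simp add: sum.remove[of "Pow (?sh B)" "?sh B"])
  have "Pow (?sh B) - {?sh B} = ?sh ` (Pow B - {B})"
    unfolding Pow_image_shift using inj_image_shift[of s "Pow B"] by (auto simp: inj_image_eq_iff inj_def)
  then have "(\<Sum>D\<in>Pow (?sh B) - {?sh B}. c D) = (\<Sum>D\<in>Pow B - {B}. c (?sh D))"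
    using sum.reindex[OF inj_image_shift[of s "Pow B - {B}"], of c] by (simp add: o_def)
  also have "\<dots> = (\<Sum>D\<in>Pow B - {B}. c D)"
  proof (rule sum.cong)
    fix D assume D: "D \<in> Pow B - {B}"
    then have "card D < card B" using fin by (auto intro: psubset_card_mono)
    then show "c (?sh D) = c D" using less.hyps[of D] D fin BH by (auto intro: finite_subset)
  qed simp
  finally have "(\<Sum>D\<in>Pow (?sh B) - {?sh B}. c D) = (\<Sum>D\<in>Pow B - {B}. c D)" .
  moreover have "f (?sh B) = f B" using shift fin BH by blast
  ultimately show ?case using e1 e2 by simp
qed

definition "L = m * G"
definition "WH = {D. D \<subseteq> {H..H + L - 1} \<and> H + L - 1 \<in> D}"
definition "dH = (\<Sum>D\<in>WH. c D)"

lemma L1: "L \<ge> 1" unfolding L_def using m G1 by simp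

lemma d_const:
  assumes n: "H + L \<le> n"
  shows "f {1..Suc n} - f {1..n} = dH"
proof -
  define W' where "W' = {D. D \<subseteq> {1..Suc n} \<and> Suc n \<in> D}"
  define Wn where "Wn = {D. D \<subseteq> {n + 2 - L..Suc n} \<and> Suc n \<in> D}"
  define t where "t = n + 2 - L - H"
  have fP: "finite (Pow {1..Suc n})" by simp
  have "f {1..Suc n} = (\<Sum>D\<in>Pow {1..Suc n}. c D)" by (rule f_c) auto
  also have "\<dots> = (\<Sum>D\<in>Pow {1..Suc n} - Pow {1..n}. c D) + (\<Sum>D\<in>Pow {1..n}. c D)"
    by (rule sum.subset_diff) auto
  also have "(\<Sum>D\<in>Pow {1..n}. c D) = f {1..n}" by (rule f_c[symmetric]) auto
  also have "Pow {1..Suc n} - Pow {1..n} = W'" unfolding W'_def by (auto simp: subset_iff le_Suc_eq)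
  finally have e1: "f {1..Suc n} - f {1..n} = (\<Sum>D\<in>W'. c D)" by simp
  have finW': "finite W'" unfolding W'_def by (rule finite_subset[of _ "Pow {1..Suc n}"]) auto
  have "(\<Sum>D\<in>W'. c D) = (\<Sum>D\<in>Wn. c D)"
  proof (rule sum.mono_neutral_right[OF finW'])
    show "Wn \<subseteq> W'"
    proof
      fix D assume "D \<in> Wn"
      then have "D \<subseteq> {n + 2 - L..Suc n}" "Suc n \<in> D" unfolding Wn_def by auto
      moreover have "{n + 2 - L..Suc n} \<subseteq> {1..Suc n}" using n by auto
      ultimately show "D \<in> W'" unfolding W'_def by auto
    qed
    show "\<forall>D\<in>W' - Wn. c D = 0"
    proof
      fix D assume D: "D \<in> W' - Wn"
      show "c D = 0"
      proof (rule ccontr)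
        assume nz: "c D \<noteq> 0"
        have finD: "finite D" and D1: "D \<subseteq> {1..}" using D unfolding W'_def by (auto intro: finite_subset)
        have "Max D = Suc n" using D unfolding W'_def by (intro Max_eqI) (auto intro: finite_subset)
        then have "Suc n < Min D + L" using c_span[OF nz finD D1] unfolding L_def by simp
        moreover have "\<forall>x\<in>D. Min D \<le> x" using finD by simp
        ultimately have "\<forall>x\<in>D. n + 2 - L \<le> x" by auto
        then show False using D unfolding W'_def Wn_def by auto
      qed
    qed
  qed
  also have "Wn = (\<lambda>D. (\<lambda>x. x + t) ` D) ` WH"
  proof
    show "(\<lambda>D. (\<lambda>x. x + t) ` D) ` WH \<subseteq> Wn"
    proof
      fix D' assume "D' \<in> (\<lambda>D. (\<lambda>x. x + t) ` D) ` WH"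
      then obtain D where D: "D \<in> WH" "D' = (\<lambda>x. x + t) ` D" by auto
      have t1: "H + t = n + 2 - L" unfolding t_def using n by simp
      have t2: "H + L - 1 + t = Suc n" unfolding t_def using n L1 by simp
      have "\<forall>x\<in>D. n + 2 - L \<le> x + t \<and> x + t \<le> Suc n"
        using D(1) t1 t2 unfolding WH_def by force
      moreover have "Suc n \<in> D'" using D t2 unfolding WH_def by force
      ultimately show "D' \<in> Wn" unfolding Wn_def D(2) by auto
    qed
    show "Wn \<subseteq> (\<lambda>D. (\<lambda>x. x + t) ` D) ` WH"
    proof
      fix D assume D: "D \<in> Wn"
      define D0 where "D0 = (\<lambda>x. x - t) ` D"
      have "D = (\<lambda>x. x + t) ` D0" unfolding D0_def image_image
      proof -
        have "\<forall>x\<in>D. n + 2 - L \<le> x" using D unfolding Wn_def by auto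
        moreover have "t \<le> n + 2 - L" unfolding t_def by simp
        ultimately have "\<forall>x\<in>D. t \<le> x" by auto
        then show "D = (\<lambda>x. x - t + t) ` D" by (auto simp: image_iff intro!: bexI)
      qed
      moreover have "D0 \<in> WH"
        using D n L1 unfolding D0_def WH_def Wn_def t_def by (force simp: image_iff)
      ultimately show "D \<in> (\<lambda>D. (\<lambda>x. x + t) ` D) ` WH" by blast
    qed
  qed
  then have "(\<Sum>D\<in>Wn. c D) = (\<Sum>D\<in>WH. c ((\<lambda>x. x + t) ` D))"
    using sum.reindex[OF inj_image_shift[of t WH], of c] by (simp add: o_def)
  also have "\<dots> = dH" unfolding dH_def
  proof (rule sum.cong)
    fix D assume "D \<in> WH"
    then have "finite D" "D \<subseteq> {H..}" unfolding WH_def by (auto intro: finite_subset)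
    then show "c ((\<lambda>x. x + t) ` D) = c D" by (rule c_shift)
  qed simp
  finally show ?thesis using e1 by simp
qed

lemma linear: "\<exists>w b N. \<forall>n\<ge>N. f {1..n} = w * real n + b"
proof -
  define N where "N = H + L"
  have "f {1..n} = f {1..N} + (real n - real N) * dH" if "N \<le> n" for n
    using that
  proof (induction n rule: dec_induct)
    case base then show ?case by simp
  next
    case (step n)
    have "f {1..Suc n} = f {1..n} + dH" using d_const[of n] step unfolding N_def by simp
    then show ?case using step by (simp add: algebra_simps)
  qed
  then show ?thesis
    by (intro exI[of _ dH] exI[of _ "f {1..N} - real N * dH"] exI[of _ N]) (auto simp: algebra_simps)
qed

end

definition DR :: "nat \<Rightarrow> (nat set \<Rightarrow> real) \<Rightarrow> bool" where
  "DR k g \<longleftrightarrow> (\<exists>\<psi>. \<forall>A. finite A \<longrightarrow> A \<subseteq> {1..} \<longrightarrow> g A = (\<Sum>xs\<in>Lst k A. \<psi> xs))"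

lemma DR_diff: "DR k f \<Longrightarrow> DR k g \<Longrightarrow> DR k (\<lambda>A. f A - g A)"
  unfolding DR_def
proof (elim exE)
  fix \<psi>1 \<psi>2 assume h1: "\<forall>A. finite A \<longrightarrow> A \<subseteq> {1..} \<longrightarrow> f A = (\<Sum>xs\<in>Lst k A. \<psi>1 xs)"
    and h2: "\<forall>A. finite A \<longrightarrow> A \<subseteq> {1..} \<longrightarrow> g A = (\<Sum>xs\<in>Lst k A. \<psi>2 xs)"
  show "\<exists>\<psi>. \<forall>A. finite A \<longrightarrow> A \<subseteq> {1..} \<longrightarrow> f A - g A = (\<Sum>xs\<in>Lst k A. \<psi> xs)"
    by (rule exI[of _ "\<lambda>xs. \<psi>1 xs - \<psi>2 xs"]) (simp add: h1 h2 sum_subtractf)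
qed

lemma DR_cmult: "DR k f \<Longrightarrow> DR k (\<lambda>A. r * f A)"
  unfolding DR_def
proof (elim exE)
  fix \<psi>1 assume h1: "\<forall>A. finite A \<longrightarrow> A \<subseteq> {1..} \<longrightarrow> f A = (\<Sum>xs\<in>Lst k A. \<psi>1 xs)"
  show "\<exists>\<psi>. \<forall>A. finite A \<longrightarrow> A \<subseteq> {1..} \<longrightarrow> r * f A = (\<Sum>xs\<in>Lst k A. \<psi> xs)"
    by (rule exI[of _ "\<lambda>xs. r * \<psi>1 xs"]) (simp add: h1 sum_distrib_left)
qed

lemma DR_zero: "DR k (\<lambda>A. 0)"
  unfolding DR_def by (rule exI[of _ "\<lambda>xs. 0"]) simp

lemma DR_add: "DR k f \<Longrightarrow> DR k g \<Longrightarrow> DR k (\<lambda>A. f A + g A)"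
  using DR_diff[of k f "\<lambda>A. - g A"] DR_cmult[of k g "-1"] by simp

lemma DR_sum: "finite I \<Longrightarrow> (\<And>i. i \<in> I \<Longrightarrow> DR k (f i)) \<Longrightarrow> DR k (\<lambda>A. \<Sum>i\<in>I. f i A)"
proof (induction I rule: finite_induct)
  case empty then show ?case by (simp add: DR_zero)
next
  case (insert x F) then show ?case by (simp add: DR_add)
qed

lemma DR_mult: "DR k f \<Longrightarrow> DR l g \<Longrightarrow> DR (k + l) (\<lambda>A. f A * g A)"
  unfolding DR_def
proof (elim exE)
  fix \<psi>1 \<psi>2 assume h1: "\<forall>A. finite A \<longrightarrow> A \<subseteq> {1..} \<longrightarrow> f A = (\<Sum>xs\<in>Lst k A. \<psi>1 xs)"
    and h2: "\<forall>A. finite A \<longrightarrow> A \<subseteq> {1..} \<longrightarrow> g A = (\<Sum>xs\<in>Lst l A. \<psi>2 xs)"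
  show "\<exists>\<psi>. \<forall>A. finite A \<longrightarrow> A \<subseteq> {1..} \<longrightarrow> f A * g A = (\<Sum>xs\<in>Lst (k + l) A. \<psi> xs)"
    by (rule exI[of _ "\<lambda>zs. \<psi>1 (take k zs) * \<psi>2 (drop k zs)"]) (simp add: h1 h2 sum_Lst_mult)
qed

lemma cont_prod_Xk: "continuous_on S (\<lambda>\<omega>. \<Prod>k\<leftarrow>xs. Xk a k \<omega>)"
  by (induction xs) (auto simp: Xk_def intro!: continuous_intros)

locale MainL = NT +
  assumes ints: "\<forall>k\<ge>1. \<exists>z::int. lin_rec_seq d c lam k = of_int z"
begin

definition "Ai k = \<lfloor>Re (a k)\<rfloor>"

lemma a_int: "k \<ge> 1 \<Longrightarrow> a k = of_int (Ai k)"
  using ints unfolding Ai_def by force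

definition SA :: "nat set \<Rightarrow> real \<Rightarrow> real" where
  "SA A \<omega> = (\<Sum>k\<in>A. Xk a k \<omega>)"

lemma SA_cont: "continuous_on UNIV (SA A)"
  unfolding SA_def[abs_def] Xk_def by (intro continuous_intros)

lemma SA_bound: "\<bar>SA A \<omega>\<bar> \<le> real (card A)"
proof -
  have "\<bar>SA A \<omega>\<bar> \<le> (\<Sum>k\<in>A. \<bar>Xk a k \<omega>\<bar>)" unfolding SA_def by (rule sum_abs)
  also have "\<dots> \<le> (\<Sum>k\<in>A. 1)" by (intro sum_mono) (simp add: Xk_def)
  finally show ?thesis by simp
qed

abbreviation "FA A \<equiv> Mh (SA A)"

lemma FA_smooth: "smooth (FA A)" by (rule mh_smooth[OF SA_cont])
lemma FA_pos: "FA A t > 0" by (rule mh_pos[OF SA_cont SA_bound])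
lemma FA_0: "FA A 0 = 1" by (rule mh_0)

definition "mu i A = (deriv ^^ i) (FA A) 0"
definition "kap i A = (deriv ^^ i) (\<lambda>t. ln (FA A t)) 0"

lemma mu_Lst:
  assumes A: "finite A" "A \<subseteq> {1..}"
  shows "mu i A = (\<Sum>xs\<in>Lst i A. phic a xs)"
proof -
  have "mu i A = integral {0..1} (\<lambda>\<omega>. SA A \<omega> ^ i)" unfolding mu_def by (rule mh_deriv0[OF SA_cont])
  also have "(\<lambda>\<omega>. SA A \<omega> ^ i) = (\<lambda>\<omega>. \<Sum>xs\<in>Lst i A. \<Prod>k\<leftarrow>xs. Xk a k \<omega>)"
    unfolding SA_def by (intro ext power_sum_Lst A)
  also have "integral {0..1} (\<lambda>\<omega>. \<Sum>xs\<in>Lst i A. \<Prod>k\<leftarrow>xs. Xk a k \<omega>) = (\<Sum>xs\<in>Lst i A. phi a xs)"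
    unfolding phi_def by (rule integral_sum) (auto intro!: integrable_continuous_interval cont_prod_Xk simp: finite_Lst A)
  also have "\<dots> = (\<Sum>xs\<in>Lst i A. phic a xs)"
  proof (rule sum.cong)
    fix xs assume "xs \<in> Lst i A"
    then have "\<forall>k\<in>set xs. a k = of_int (Ai k)" using A a_int unfolding Lst_def by auto
    then show "phi a xs = phic a xs" by (rule phi_eq)
  qed simp
  finally show ?thesis .
qed

lemma mu_int:
  assumes A: "finite A" "A \<subseteq> {1..}"
  shows "2 ^ i * mu i A \<in> \<int>"
proof -
  have "2 ^ i * mu i A = (\<Sum>xs\<in>Lst i A. 2 ^ i * phic a xs)" unfolding mu_Lst[OF A] by (simp add: sum_distrib_left)
  also have "\<dots> = (\<Sum>xs\<in>Lst i A. real (card {es\<in>Sg (length xs). Vs a (zip es xs) = 0}))"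
    by (intro sum.cong) (auto simp: phic_def Lst_def)
  also have "\<dots> \<in> \<int>" by (intro Ints_sum) simp
  finally show ?thesis .
qed

lemma kap_int:
  assumes A: "finite A" "A \<subseteq> {1..}"
  shows "2 ^ k * kap k A \<in> \<int>"
  unfolding kap_def
  by (rule cumulant_int[OF FA_smooth FA_pos FA_0, of k]) (use mu_int[OF A] in \<open>auto simp: mu_def\<close>)

lemma kap_rec: "mu (Suc j) A = kap (Suc j) A + (\<Sum>i = 1..j. real (j choose i) * mu i A * kap (Suc (j-i)) A)"
  unfolding mu_def kap_def using cumulant_rec0[OF FA_smooth FA_pos, of j] FA_0 by simp

lemma DR_mu: "DR i (mu i)"
  unfolding DR_def using mu_Lst by blast

lemma DR_kap: "k \<ge> 1 \<Longrightarrow> DR k (kap k)"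
proof (induction k rule: less_induct)
  case (less k)
  then obtain j where k: "k = Suc j" by (cases k) auto
  have eq: "kap k = (\<lambda>A. mu (Suc j) A - (\<Sum>i = 1..j. real (j choose i) * (mu i A * kap (Suc (j-i)) A)))"
    unfolding k using kap_rec by (auto simp: algebra_simps)
  have "DR (Suc j) (\<lambda>A. \<Sum>i = 1..j. real (j choose i) * (mu i A * kap (Suc (j-i)) A))"
  proof (rule DR_sum)
    fix i assume i: "i \<in> {1..j}"
    have "DR (i + Suc (j - i)) (\<lambda>A. mu i A * kap (Suc (j-i)) A)"
      by (rule DR_mult[OF DR_mu less.IH]) (use i k in auto)
    then show "DR (Suc j) (\<lambda>A. real (j choose i) * (mu i A * kap (Suc (j-i)) A))"
      using i by (intro DR_cmult) auto
  qed simp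
  then have "DR (Suc j) (\<lambda>A. mu (Suc j) A - (\<Sum>i = 1..j. real (j choose i) * (mu i A * kap (Suc (j-i)) A)))"
    by (rule DR_diff[OF DR_mu])
  then show ?case using eq k by simp
qed

end

lemma zip_map_sh: "zip es (map (\<lambda>k. k + s) xs) = sh s (zip es xs)"
proof (induction xs arbitrary: es)
  case Nil then show ?case by simp
next
  case (Cons x xs) then show ?case by (cases es) auto
qed

lemma Lst_image: "Lst k (f ` A) = map f ` Lst k A"
proof
  show "Lst k (f ` A) \<subseteq> map f ` Lst k A"
  proof
    fix xs assume xs: "xs \<in> Lst k (f ` A)"
    then have "xs \<in> lists (f ` A)" unfolding Lst_def by auto
    then obtain ys where "ys \<in> lists A" "xs = map f ys" by (auto simp: lists_image)
    then show "xs \<in> map f ` Lst k A" using xs unfolding Lst_def by auto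
  qed
qed (auto simp: Lst_def intro!: imageI)

context MainL
begin

lemma Sg_signs: "es \<in> Sg n \<Longrightarrow> x \<in> set (zip es xs) \<Longrightarrow> fst x \<in> {-1,1}"
proof -
  assume es: "es \<in> Sg n" and x: "x \<in> set (zip es xs)"
  have "fst x \<in> set es" using set_zip_leftD[of "fst x" "snd x" es xs] x by simp
  then show "fst x \<in> {-1,1}" using es unfolding Sg_def Lst_def by auto
qed

lemma phic_shift:
  assumes xs: "set xs \<subseteq> {H M..}" "length xs \<le> M"
  shows "phic a (map (\<lambda>k. k + s) xs) = phic a xs"
proof -
  have "{es\<in>Sg (length xs). Vs a (zip es (map (\<lambda>k. k + s) xs)) = 0} = {es\<in>Sg (length xs). Vs a (zip es xs) = 0}"
  proof (intro Collect_cong conj_cong refl)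
    fix es assume es: "es \<in> Sg (length xs)"
    have "length (zip es xs) \<le> M" using xs by simp
    moreover have "\<forall>x\<in>set (zip es xs). fst x \<in> {-1,1} \<and> H M \<le> snd x"
    proof
      fix x assume x: "x \<in> set (zip es xs)"
      have "snd x \<in> set xs" using set_zip_rightD[of "fst x" "snd x" es xs] x by simp
      then show "fst x \<in> {-1,1} \<and> H M \<le> snd x" using Sg_signs[OF es x] xs(1) by auto
    qed
    ultimately show "(Vs a (zip es (map (\<lambda>k. k + s) xs)) = 0) = (Vs a (zip es xs) = 0)"
      unfolding zip_map_sh using shift_inv by blast
  qed
  then show ?thesis unfolding phic_def by simp
qed

lemma mu_shift:
  assumes A: "finite A" "A \<subseteq> {Suc (H M)..}" and k: "k \<le> M"
  shows "mu k ((\<lambda>x. x + s) ` A) = mu k A"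
proof -
  have A1: "A \<subseteq> {1..}" using A by auto
  have A1': "(\<lambda>x. x + s) ` A \<subseteq> {1..}" using A by auto
  have inj: "inj_on (map (\<lambda>x. x + s)) (Lst k A)" by (auto simp: inj_on_def)
  have "mu k ((\<lambda>x. x + s) ` A) = (\<Sum>xs\<in>Lst k ((\<lambda>x. x + s) ` A). phic a xs)"
    by (rule mu_Lst) (use A A1' in auto)
  also have "\<dots> = (\<Sum>xs\<in>Lst k A. phic a (map (\<lambda>x. x + s) xs))"
    unfolding Lst_image using sum.reindex[OF inj] by (simp add: o_def)
  also have "\<dots> = (\<Sum>xs\<in>Lst k A. phic a xs)"
  proof (rule sum.cong)
    fix xs assume "xs \<in> Lst k A"
    then show "phic a (map (\<lambda>x. x + s) xs) = phic a xs" using A k by (intro phic_shift) (auto simp: Lst_def)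
  qed simp
  also have "\<dots> = mu k A" by (rule mu_Lst[symmetric]) (use A A1 in auto)
  finally show ?thesis .
qed

lemma kap_shift:
  assumes A: "finite A" "A \<subseteq> {Suc (H M)..}" and k: "k \<le> M"
  shows "kap k ((\<lambda>x. x + s) ` A) = kap k A"
  unfolding kap_def
  by (rule cumulant_uniq[OF FA_smooth FA_pos FA_smooth FA_pos _ k])
     (use mu_shift[OF A] in \<open>auto simp: mu_def\<close>)

end

context MainL
begin

lemma phic_split:
  assumes xs: "\<forall>k\<in>set xs. k \<le> r" and ys: "\<forall>k\<in>set ys. r + G M \<le> k" and len: "length xs + length ys \<le> M"
  shows "phic a (xs @ ys) = phic a xs * phic a ys"
proof -
  let ?n1 = "length xs" and ?n2 = "length ys"
  define Z where "Z = {es\<in>Sg (?n1 + ?n2). Vs a (zip es (xs @ ys)) = 0}"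
  define Z1 where "Z1 = {es\<in>Sg ?n1. Vs a (zip es xs) = 0}"
  define Z2 where "Z2 = {es\<in>Sg ?n2. Vs a (zip es ys) = 0}"
  have G1: "G M \<ge> 1" unfolding G_def by simp
  have key: "Vs a (zip e1 xs @ zip e2 ys) = 0 \<longleftrightarrow> Vs a (zip e1 xs) = 0 \<and> Vs a (zip e2 ys) = 0"
    if e1: "e1 \<in> Sg ?n1" and e2: "e2 \<in> Sg ?n2" for e1 e2
  proof
    assume V0: "Vs a (zip e1 xs @ zip e2 ys) = 0"
    let ?ts = "zip e1 xs @ zip e2 ys"
    have l: "length ?ts \<le> M" using len by simp
    have s: "\<forall>x\<in>set ?ts. fst x \<in> {-1,1} \<and> (snd x \<le> r \<or> r + G M \<le> snd x)"
    proof
      fix x assume x: "x \<in> set ?ts"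
      then have "x \<in> set (zip e1 xs) \<or> x \<in> set (zip e2 ys)" by simp
      then show "fst x \<in> {-1,1} \<and> (snd x \<le> r \<or> r + G M \<le> snd x)"
      proof
        assume x1: "x \<in> set (zip e1 xs)"
        then show ?thesis using Sg_signs[OF e1 x1] set_zip_rightD[of "fst x" "snd x" e1 xs] xs by auto
      next
        assume x2: "x \<in> set (zip e2 ys)"
        then show ?thesis using Sg_signs[OF e2 x2] set_zip_rightD[of "fst x" "snd x" e2 ys] ys by auto
      qed
    qed
    have f1: "filter (\<lambda>x. r + G M \<le> snd x) (zip e1 xs) = []"
    proof (rule filter_False, rule ballI)
      fix x assume "x \<in> set (zip e1 xs)"
      then have "snd x \<le> r" using set_zip_rightD[of "fst x" "snd x" e1 xs] xs by auto
      then show "\<not> r + G M \<le> snd x" using G1 by simp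
    qed
    have f2: "filter (\<lambda>x. r + G M \<le> snd x) (zip e2 ys) = zip e2 ys"
    proof (rule filter_True, rule ballI)
      fix x assume "x \<in> set (zip e2 ys)"
      then show "r + G M \<le> snd x" using set_zip_rightD[of "fst x" "snd x" e2 ys] ys by auto
    qed
    have "Vs a (zip e2 ys) = 0" using split_zero[OF l s V0] f1 f2 by simp
    then show "Vs a (zip e1 xs) = 0 \<and> Vs a (zip e2 ys) = 0" using V0 by simp
  qed simp
  have lenS: "length es = n" if "es \<in> Sg n" for es n using that unfolding Sg_def Lst_def by auto
  have Zeq: "Z = (\<lambda>(e1, e2). e1 @ e2) ` (Z1 \<times> Z2)"
  proof
    show "Z \<subseteq> (\<lambda>(e1, e2). e1 @ e2) ` (Z1 \<times> Z2)"
    proof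
      fix es assume es: "es \<in> Z"
      define e1 where "e1 = take ?n1 es"
      define e2 where "e2 = drop ?n1 es"
      have esS: "es \<in> Sg (?n1 + ?n2)" using es unfolding Z_def by auto
      have e1S: "e1 \<in> Sg ?n1" and e2S: "e2 \<in> Sg ?n2"
        using esS unfolding e1_def e2_def Sg_def Lst_def by (auto dest: in_set_takeD in_set_dropD)
      have "zip es (xs @ ys) = zip e1 xs @ zip e2 ys"
        unfolding e1_def e2_def by (rule zip_append2)
      then have "Vs a (zip e1 xs) = 0 \<and> Vs a (zip e2 ys) = 0" using key[OF e1S e2S] es unfolding Z_def by auto
      then have "(e1, e2) \<in> Z1 \<times> Z2" using e1S e2S unfolding Z1_def Z2_def by auto
      moreover have "es = e1 @ e2" unfolding e1_def e2_def by simp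
      ultimately show "es \<in> (\<lambda>(e1, e2). e1 @ e2) ` (Z1 \<times> Z2)" by force
    qed
    show "(\<lambda>(e1, e2). e1 @ e2) ` (Z1 \<times> Z2) \<subseteq> Z"
    proof
      fix es assume "es \<in> (\<lambda>(e1, e2). e1 @ e2) ` (Z1 \<times> Z2)"
      then obtain e1 e2 where e: "e1 \<in> Z1" "e2 \<in> Z2" "es = e1 @ e2" by auto
      have e1S: "e1 \<in> Sg ?n1" and e2S: "e2 \<in> Sg ?n2" using e unfolding Z1_def Z2_def by auto
      have "es \<in> Sg (?n1 + ?n2)" using e1S e2S e(3) unfolding Sg_def Lst_def by auto
      moreover have "zip es (xs @ ys) = zip e1 xs @ zip e2 ys" using e(3) lenS[OF e1S] by simp
      ultimately show "es \<in> Z" using key[OF e1S e2S] e unfolding Z_def Z1_def Z2_def by auto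
    qed
  qed
  have inj: "inj_on (\<lambda>(e1, e2). e1 @ e2) (Z1 \<times> Z2)"
  proof (rule inj_onI)
    fix p q assume p: "p \<in> Z1 \<times> Z2" and q: "q \<in> Z1 \<times> Z2" and eq: "(\<lambda>(e1, e2). e1 @ e2) p = (\<lambda>(e1, e2). e1 @ e2) q"
    have "length (fst p) = length (fst q)" using p q lenS unfolding Z1_def by auto
    then show "p = q" using eq by (cases p, cases q) auto
  qed
  have "card Z = card Z1 * card Z2" unfolding Zeq card_image[OF inj] card_cartesian_product ..
  then have "real (card Z) = real (card Z1) * real (card Z2)" by simp
  then show ?thesis unfolding phic_def length_append Z_def[symmetric] Z1_def[symmetric] Z2_def[symmetric]
    by (simp add: power_add)
qed

end

context MainL
begin

lemma int_prod_split:
  assumes A1: "finite A1" "A1 \<subseteq> {1..}" "\<forall>k\<in>A1. k \<le> r"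
    and A2: "finite A2" "\<forall>k\<in>A2. r + G M \<le> k" and ij: "i + j \<le> M"
  shows "integral {0..1} (\<lambda>\<omega>. SA A1 \<omega> ^ i * SA A2 \<omega> ^ j) = mu i A1 * mu j A2"
proof -
  have G1: "G M \<ge> 1" unfolding G_def by simp
  have A2': "A2 \<subseteq> {1..}" using A2 G1 by force
  have "(\<lambda>\<omega>. SA A1 \<omega> ^ i * SA A2 \<omega> ^ j) = (\<lambda>\<omega>. \<Sum>xs\<in>Lst i A1. \<Sum>ys\<in>Lst j A2. \<Prod>k\<leftarrow>xs @ ys. Xk a k \<omega>)"
    unfolding SA_def by (intro ext) (simp add: power_sum_Lst A1 A2 sum_product)
  then have "integral {0..1} (\<lambda>\<omega>. SA A1 \<omega> ^ i * SA A2 \<omega> ^ j)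
      = integral {0..1} (\<lambda>\<omega>. \<Sum>xs\<in>Lst i A1. \<Sum>ys\<in>Lst j A2. \<Prod>k\<leftarrow>xs @ ys. Xk a k \<omega>)" by simp
  also have "\<dots> = (\<Sum>xs\<in>Lst i A1. integral {0..1} (\<lambda>\<omega>. \<Sum>ys\<in>Lst j A2. \<Prod>k\<leftarrow>xs @ ys. Xk a k \<omega>))"
    by (rule integral_sum) (auto intro!: integrable_continuous_interval continuous_on_sum continuous_on_mult cont_prod_Xk simp: finite_Lst A1)
  also have "\<dots> = (\<Sum>xs\<in>Lst i A1. \<Sum>ys\<in>Lst j A2. phi a (xs @ ys))"
    unfolding phi_def
    by (intro sum.cong refl integral_sum) (auto intro!: integrable_continuous_interval continuous_on_mult cont_prod_Xk simp: finite_Lst A2)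
  also have "\<dots> = (\<Sum>xs\<in>Lst i A1. \<Sum>ys\<in>Lst j A2. phic a xs * phic a ys)"
  proof (intro sum.cong refl)
    fix xs ys assume xs: "xs \<in> Lst i A1" and ys: "ys \<in> Lst j A2"
    have "\<forall>k\<in>set (xs @ ys). a k = of_int (Ai k)" using xs ys A1 A2' a_int unfolding Lst_def by auto
    then have "phi a (xs @ ys) = phic a (xs @ ys)" by (rule phi_eq)
    also have "\<dots> = phic a xs * phic a ys"
      by (rule phic_split) (use xs ys A1 A2 ij in \<open>auto simp: Lst_def\<close>)
    finally show "phi a (xs @ ys) = phic a xs * phic a ys" .
  qed
  also have "\<dots> = mu i A1 * mu j A2"
    unfolding mu_Lst[OF A1(1,2)] mu_Lst[OF A2(1) A2'] by (simp add: sum_product)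
  finally show ?thesis .
qed

lemma kap_add:
  assumes A: "finite A" "A \<subseteq> {1..}" "\<forall>x\<in>A. x \<le> r \<or> r + G M \<le> x" and k: "k \<le> M"
  shows "kap k A = kap k {x\<in>A. x \<le> r} + kap k {x\<in>A. r + G M \<le> x}"
proof -
  define A1 where "A1 = {x\<in>A. x \<le> r}"
  define A2 where "A2 = {x\<in>A. r + G M \<le> x}"
  have G1: "G M \<ge> 1" unfolding G_def by simp
  have fin1: "finite A1" and fin2: "finite A2" using A unfolding A1_def A2_def by auto
  have disj: "A1 \<inter> A2 = {}" using G1 unfolding A1_def A2_def by auto
  have Aeq: "A = A1 \<union> A2" using A unfolding A1_def A2_def by auto
  have SAeq: "SA A \<omega> = SA A1 \<omega> + SA A2 \<omega>" for \<omega>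
    unfolding SA_def Aeq by (rule sum.union_disjoint[OF fin1 fin2 disj])
  define F2 where "F2 = (\<lambda>t. FA A1 t * FA A2 t)"
  have sF2: "smooth F2" unfolding F2_def by (intro smooth_mult FA_smooth)
  have pF2: "F2 t > 0" for t unfolding F2_def using FA_pos[of A1 t] FA_pos[of A2 t] by simp
  have eq: "\<forall>i\<le>M. (deriv ^^ i) (FA A) 0 = (deriv ^^ i) F2 0"
  proof (intro allI impI)
    fix i assume i: "i \<le> M"
    have "(deriv ^^ i) F2 0 = (\<Sum>l = 0..i. real (i choose l) * mu l A1 * mu (i - l) A2)"
      unfolding F2_def mu_def by (rule higher_deriv_mult_smooth[OF FA_smooth FA_smooth])
    also have "\<dots> = (\<Sum>l = 0..i. real (i choose l) * integral {0..1} (\<lambda>\<omega>. SA A1 \<omega> ^ l * SA A2 \<omega> ^ (i - l)))"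
    proof (intro sum.cong refl)
      fix l assume l: "l \<in> {0..i}"
      have "integral {0..1} (\<lambda>\<omega>. SA A1 \<omega> ^ l * SA A2 \<omega> ^ (i - l)) = mu l A1 * mu (i - l) A2"
        by (rule int_prod_split) (use fin1 fin2 A l i in \<open>auto simp: A1_def A2_def\<close>)
      then show "real (i choose l) * mu l A1 * mu (i - l) A2
          = real (i choose l) * integral {0..1} (\<lambda>\<omega>. SA A1 \<omega> ^ l * SA A2 \<omega> ^ (i - l))" by simp
    qed
    also have "\<dots> = integral {0..1} (\<lambda>\<omega>. \<Sum>l = 0..i. real (i choose l) * (SA A1 \<omega> ^ l * SA A2 \<omega> ^ (i - l)))"
      by (subst integral_sum) (auto intro!: integrable_continuous_interval continuous_intros SA_cont[THEN continuous_on_subset])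
    also have "(\<lambda>\<omega>. \<Sum>l = 0..i. real (i choose l) * (SA A1 \<omega> ^ l * SA A2 \<omega> ^ (i - l))) = (\<lambda>\<omega>. SA A \<omega> ^ i)"
      unfolding SAeq by (intro ext) (simp add: binomial_ring atLeast0AtMost mult.assoc)
    also have "integral {0..1} (\<lambda>\<omega>. SA A \<omega> ^ i) = (deriv ^^ i) (FA A) 0"
      by (rule mh_deriv0[OF SA_cont, symmetric])
    finally show "(deriv ^^ i) (FA A) 0 = (deriv ^^ i) F2 0" by simp
  qed
  have "kap k A = (deriv ^^ k) (\<lambda>t. ln (F2 t)) 0"
    unfolding kap_def by (rule cumulant_uniq[OF FA_smooth FA_pos sF2 pF2 eq k])
  also have "(\<lambda>t. ln (F2 t)) = (\<lambda>t. ln (FA A1 t) + ln (FA A2 t))"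
    unfolding F2_def
  proof
    fix t
    have "FA A1 t > 0" "FA A2 t > 0" by (rule FA_pos)+
    then show "ln (FA A1 t * FA A2 t) = ln (FA A1 t) + ln (FA A2 t)" by (rule ln_mult_pos)
  qed
  also have "(deriv ^^ k) (\<lambda>t. ln (FA A1 t) + ln (FA A2 t)) 0 = kap k A1 + kap k A2"
    unfolding kap_def by (rule higher_deriv_add_smooth) (intro smooth_ln FA_smooth FA_pos)+
  finally show ?thesis unfolding A1_def A2_def .
qed

end

context MainL
begin

lemma main_lin:
  assumes m: "m \<ge> 1"
  shows "\<exists>w b N. \<forall>n\<ge>N. kap m {1..n} = w * real n + b"
proof -
  obtain \<psi> where psi: "\<And>A. finite A \<Longrightarrow> A \<subseteq> {1..} \<Longrightarrow> kap m A = (\<Sum>xs\<in>Lst m A. \<psi> xs)"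
    using DR_kap[OF m] unfolding DR_def by blast
  interpret ab: ablin "kap m" \<psi> m "G m" "Suc (H m)"
  proof
    show "1 \<le> m" by (rule m)
    show "\<And>A. finite A \<Longrightarrow> A \<subseteq> {1..} \<Longrightarrow> kap m A = (\<Sum>xs\<in>Lst m A. \<psi> xs)" by (rule psi)
    show "\<And>A r. finite A \<Longrightarrow> A \<subseteq> {1..} \<Longrightarrow> \<forall>x\<in>A. x \<le> r \<or> r + G m \<le> x \<Longrightarrow>
        kap m A = kap m {x \<in> A. x \<le> r} + kap m {x \<in> A. r + G m \<le> x}"
      by (rule kap_add) auto
    show "\<And>A s. finite A \<Longrightarrow> A \<subseteq> {Suc (H m)..} \<Longrightarrow> kap m ((\<lambda>x. x + s) ` A) = kap m A"
      by (rule kap_shift) auto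
    show "1 \<le> G m" unfolding G_def by simp
    show "1 \<le> Suc (H m)" by simp
  qed
  show ?thesis by (rule ab.linear)
qed

lemma main_int:
  assumes m: "m \<ge> 1"
  shows "\<exists>n1::nat. \<exists>W B :: int. \<forall>n::nat. n > n1 \<longrightarrow> kap m {1..n} = (1/2) ^ m * (of_int W * real n + of_int B)"
proof -
  obtain w b N where lin: "\<And>n. n \<ge> N \<Longrightarrow> kap m {1..n} = w * real n + b" using main_lin[OF m] by blast
  have ki: "2 ^ m * kap m {1..n} \<in> \<int>" for n by (rule kap_int) auto
  have "w = kap m {1..Suc N} - kap m {1..N}" using lin[of N] lin[of "Suc N"] by (simp add: algebra_simps)
  then have wi: "2 ^ m * w \<in> \<int>" using ki[of "Suc N"] ki[of N] by (simp add: right_diff_distrib Ints_diff)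
  have "2 ^ m * b = 2 ^ m * kap m {1..N} - real N * (2 ^ m * w)" using lin[of N] by (simp add: algebra_simps)
  then have bi: "2 ^ m * b \<in> \<int>" using ki[of N] wi by (simp add: Ints_diff Ints_mult)
  obtain W where W: "2 ^ m * w = of_int W" using wi by (auto elim: Ints_cases)
  obtain B where B: "2 ^ m * b = of_int B" using bi by (auto elim: Ints_cases)
  show ?thesis
  proof (intro exI allI impI)
    fix n assume "N < n"
    then have "kap m {1..n} = w * real n + b" using lin by simp
    also have "\<dots> = (1/2) ^ m * ((2 ^ m * w) * real n + 2 ^ m * b)"
      by (simp add: algebra_simps power_one_over)
    finally show "kap m {1..n} = (1/2) ^ m * (of_int W * real n + of_int B)" using W B by simp
  qed
qed

end

theorem theoremC:
  fixes d :: nat and p :: "int poly" and lam c :: "nat \<Rightarrow> complex"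
  assumes irred: "irreducible p"
    and deg: "degree p = d"
    and roots: "map_poly of_int p = smult (of_int (lead_coeff p)) (\<Prod>i=1..d. [:- lam i, 1:])"
    and d_pos: "d \<ge> 1"
    and real1: "lam 1 \<in> \<real>"
    and gt1: "Re (lam 1) > 1"
    and dom: "\<forall>i\<in>{2..d}. cmod (lam i) < Re (lam 1)"
    and c1: "c 1 \<noteq> 0"
    and posint: "\<forall>k\<ge>1. \<exists>z::int. z > 0 \<and> lin_rec_seq d c lam k = of_int z"
  shows "\<forall>m::nat. \<exists>n1::nat. \<exists>w b :: int. \<forall>n::nat. n > n1 \<longrightarrow>
           cumulant (lebesgue_on {0..1}) m (S_sum (lin_rec_seq d c lam) n)
             = (1/2) ^ m * (of_int w * real n + of_int b)"
proof
  fix m :: nat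
  have lam1: "lam 1 = complex_of_real (Re (lam 1))" using real1 by (simp add: complex_is_Real_iff complex_eq_iff)
  interpret MainL d lam c "Re (lam 1)"
  proof
    show "lam 1 = complex_of_real (Re (lam 1))" by (rule lam1)
    show "1 < Re (lam 1)" by (rule gt1)
    show "\<forall>l\<in>{2..d}. cmod (lam l) < Re (lam 1)" by (rule dom)
    show "c 1 \<noteq> 0" by (rule c1)
    show "1 \<le> d" by (rule d_pos)
    show "\<And>P l. poly (map_poly of_int P) (lam 1) = 0 \<Longrightarrow> l \<in> {1..d} \<Longrightarrow> poly (map_poly of_int P) (lam l) = 0"
      using galois[OF irred deg roots d_pos] by blast
    show "\<forall>k\<ge>1. \<exists>z::int. lin_rec_seq d c lam k = of_int z" using posint by blast
  qed
  have Seq: "S_sum (lin_rec_seq d c lam) n = SA {1..n}" for n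
    unfolding S_sum_def SA_def Xk_def by (intro ext) simp
  have cum: "cumulant (lebesgue_on {0..1}) m (S_sum (lin_rec_seq d c lam) n) = kap m {1..n}" for n
    unfolding Seq kap_def by (rule cumulant_eq[OF SA_cont])
  show "\<exists>n1::nat. \<exists>w b :: int. \<forall>n::nat. n > n1 \<longrightarrow>
           cumulant (lebesgue_on {0..1}) m (S_sum (lin_rec_seq d c lam) n)
             = (1/2) ^ m * (of_int w * real n + of_int b)"
  proof (cases "m = 0")
    case True
    have "kap m {1..n} = 0" for n unfolding kap_def True using FA_0 by simp
    then show ?thesis unfolding cum by (intro exI[of _ 0]) simp
  next
    case False
    then show ?thesis unfolding cum using main_int[of m] by simp
  qed
qed

end
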